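(* Let $F$, $P_F$, $\mathcal F_0$ be as described in the context. For any non-peripheral curve $C\subset\widehat{\mathbb C}\setminus P_F$ and any component $C'$ of $F^{-1}(C)$, $N_{\mathcal F_0}(C')\le N_{\mathcal F_0}(C)$.
   Context: Setting: $f,g$ are post-critically finite polynomials, each with a bounded immediate super-attracting basin of degree $d_0\ge2$ normalized to be the unit disk $\mathbb D$ on which the map is $z\mapsto z^{d_0}$, with the other critical orbits avoiding $\mathbb D$. With $\iota(\zeta)=e^{2\pi ik/(d_0-1)}/\zeta$ for a fixed $1\le k\le d_0-1$, the topological gluing is $F(z)=f(z)$ for $z\in\mathbb D^c$, $F(z)=\iota\circ g\circ\iota(z)$ for $z\in\mathbb D$; $P_F$ is its finite post-critical set. A non-peripheral curve is a simple closed curve in $\widehat{\mathbb C}\setminus P_F$ each of whose complementary components contains at least two points of $P_F$. A separating arc is a piecewise smooth Jordan curve. $\mathcal F_0$ is a fixed finite family of periodic separating arcs (formed by forward orbits of images of an admissible family of arcs built from external/internal rays of $f$ and $\tilde g=\iota\circ g\circ\iota$) such that $F$ permutes $\mathcal F_0$ and maps each $L\in\mathcal F_0$ homeomorphically onto $F(L)\in\mathcal F_0$. The complexity is $N_{\mathcal F_0}(C)=\min_{\gamma\sim C}\sum_{L\in\mathcal F_0}N(\gamma,L)$, minimum over simple closed curves $\gamma$ homotopic to $C$ in $\widehat{\mathbb C}\setminus P_F$, with $N(\gamma,L)$ the number of intersection points. *)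

theory Defs
  imports "HOL-Analysis.Analysis" "HOL-Computational_Algebra.Polynomial" "HOL-Library.Extended_Nat"
begin

section \<open>Riemann sphere: complex option, None = infinity, topology via stereographic projection\<close>

definition st :: "complex option \<Rightarrow> real \<times> real \<times> real" where
  "st w = (case w of None \<Rightarrow> (0, 0, 1)
     | Some z \<Rightarrow> (2 * Re z / ((cmod z)^2 + 1), 2 * Im z / ((cmod z)^2 + 1),
                  ((cmod z)^2 - 1) / ((cmod z)^2 + 1)))"

definition jordan_curve :: "complex option set \<Rightarrow> bool" where
  "jordan_curve C \<longleftrightarrow> (\<exists>p. simple_path p \<and> pathfinish p = pathstart p \<and> path_image p = st ` C)"

definition separating_arc :: "complex option set \<Rightarrow> bool" where
  "separating_arc L \<longleftrightarrow> (\<exists>p. simple_path p \<and> valid_path p \<and> pathfinish p = pathstart p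
                              \<and> path_image p = st ` L)"

text \<open>Free homotopy of (unoriented) simple closed curves in the sphere minus P.\<close>
definition curve_homotopic :: "complex option set \<Rightarrow> complex option set \<Rightarrow> complex option set \<Rightarrow> bool" where
  "curve_homotopic P \<gamma> C \<longleftrightarrow> (\<exists>p q. simple_path p \<and> pathfinish p = pathstart p \<and> path_image p = st ` \<gamma>
      \<and> simple_path q \<and> pathfinish q = pathstart q \<and> path_image q = st ` C
      \<and> homotopic_loops (st ` (UNIV - P)) p q)"

definition non_peripheral :: "complex option set \<Rightarrow> complex option set \<Rightarrow> bool" where
  "non_peripheral P C \<longleftrightarrow> jordan_curve C \<and> C \<inter> P = {} \<and>
     (\<forall>x \<in> st ` (UNIV - C). 2 \<le> card (connected_component_set (st ` (UNIV - C)) x \<inter> st ` P))"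

definition Nint :: "complex option set \<Rightarrow> complex option set \<Rightarrow> enat" where
  "Nint \<gamma> L = (if finite (\<gamma> \<inter> L) then enat (card (\<gamma> \<inter> L)) else \<infinity>)"

definition complexity :: "complex option set \<Rightarrow> complex option set set \<Rightarrow> complex option set \<Rightarrow> enat" where
  "complexity P F0 C = (INF \<gamma> \<in> {\<gamma>. jordan_curve \<gamma> \<and> curve_homotopic P \<gamma> C}. \<Sum>L\<in>F0. Nint \<gamma> L)"

text \<open>f is a post-critically finite polynomial p with a bounded immediate super-attracting
 basin U of local degree d0, normalized by a homeomorphism phi of the plane with phi(D) = U
 so that f = phi^-1 o p o phi and f(z) = z^d0 on D; other critical orbits of p avoid U.\<close>
definition normalized_pcf_poly :: "nat \<Rightarrow> (complex \<Rightarrow> complex) \<Rightarrow> bool" where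
  "normalized_pcf_poly d0 f \<longleftrightarrow> (\<exists>(p::complex poly) \<phi> \<psi> a.
      degree p \<ge> 2 \<and> homeomorphism UNIV UNIV \<phi> \<psi> \<and> (\<forall>z. \<phi> (f z) = poly p (\<phi> z)) \<and>
      poly p a = a \<and> order a (p - [:a:]) = d0 \<and>
      (let U = connected_component_set {z. (\<lambda>n. (poly p ^^ n) z) \<longlonglongrightarrow> a} a in
         bounded U \<and> \<phi> ` ball 0 1 = U \<and>
         (\<forall>c. poly (pderiv p) c = 0 \<and> c \<notin> U \<longrightarrow> (\<forall>n. (poly p ^^ n) c \<notin> U))) \<and>
      (\<forall>z \<in> ball 0 1. f z = z ^ d0) \<and>
      finite {(poly p ^^ n) c | n c. n \<ge> 1 \<and> poly (pderiv p) c = 0})"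

definition iota :: "nat \<Rightarrow> nat \<Rightarrow> complex \<Rightarrow> complex" where
  "iota d0 k \<zeta> = cis (2 * pi * real k / real (d0 - 1)) / \<zeta>"

definition glue :: "(complex \<Rightarrow> complex) \<Rightarrow> (complex \<Rightarrow> complex) \<Rightarrow> nat \<Rightarrow> nat
                    \<Rightarrow> complex option \<Rightarrow> complex option" where
  "glue f g d0 k w = (case w of None \<Rightarrow> None
     | Some z \<Rightarrow> if cmod z \<ge> 1 then Some (f z)
                else if z = 0 then Some 0
                else if g (iota d0 k z) = 0 then None
                else Some (iota d0 k (g (iota d0 k z))))"

definition critical_points :: "(complex option \<Rightarrow> complex option) \<Rightarrow> complex option set" where
  "critical_points F = {c. \<forall>e>0. \<not> inj_on F {w. dist (st w) (st c) < e}}"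

definition postcrit :: "(complex option \<Rightarrow> complex option) \<Rightarrow> complex option set" where
  "postcrit F = {(F ^^ n) c | n c. n \<ge> 1 \<and> c \<in> critical_points F}"

definition sep_family :: "(complex option \<Rightarrow> complex option) \<Rightarrow> complex option set set \<Rightarrow> bool" where
  "sep_family F F0 \<longleftrightarrow> finite F0 \<and> bij_betw ((`) F) F0 F0 \<and>
     (\<forall>L \<in> F0. separating_arc L \<and> inj_on F L \<and> F ` L \<in> F0)"

definition preimage_component :: "(complex option \<Rightarrow> complex option) \<Rightarrow> complex option set
                                   \<Rightarrow> complex option set \<Rightarrow> bool" where
  "preimage_component F C C' \<longleftrightarrow>
     (\<exists>x \<in> F -` C. st ` C' = connected_component_set (st ` (F -` C)) (st x))"

end

theory Submission
  imports Defs "HOL-Computational_Algebra.Fundamental_Theorem_Algebra"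
begin

lemma periodic_cont:
  fixes H :: "real \<times> real \<Rightarrow> 'b::topological_space"
  assumes cH: "continuous_on ({0..1}\<times>{0..1}) H"
    and loop: "\<And>\<tau>. \<tau> \<in> {0..1} \<Longrightarrow> H(\<tau>,1) = H(\<tau>,0)"
  shows "continuous_on ({0..1}\<times>UNIV) (\<lambda>(\<tau>,t). H(\<tau>, frac t))"
proof -
  have piece: "continuous_on ({0..1}\<times>{of_int k..of_int k + 1}) (\<lambda>(\<tau>,t). H(\<tau>, frac t))" for k :: int
  proof -
    have c1: "continuous_on ({0..1}\<times>{of_int k..of_int k + 1}) (\<lambda>(\<tau>,t). H(\<tau>, t - of_int k))"
    proof -
      have "continuous_on ({0..1}\<times>{of_int k..of_int k + 1}) (\<lambda>x::real\<times>real. (fst x, snd x - of_int k))"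
        by (intro continuous_intros)
      moreover have "(\<lambda>x::real\<times>real. (fst x, snd x - of_int k)) ` ({0..1}\<times>{of_int k..of_int k + 1}) \<subseteq> {0..1}\<times>{0..1}"
        by auto
      ultimately have "continuous_on ({0..1}\<times>{of_int k..of_int k + 1}) (H \<circ> (\<lambda>x::real\<times>real. (fst x, snd x - of_int k)))"
        using cH continuous_on_compose continuous_on_subset by blast
      then show ?thesis by (simp add: o_def case_prod_beta)
    qed
    have e1: "H(\<tau>, frac t) = H(\<tau>, t - of_int k)" if "\<tau> \<in> {0..1}" "t \<in> {of_int k..of_int k + 1}" for \<tau> t
    proof (cases "t = of_int k + 1")
      case True
      then have "frac t = 0" by simp
      then show ?thesis using True loop[OF that(1)] by simp
    next
      case False
      then have "t - of_int k \<in> {0..<1}" using that by auto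
      then have "frac (t - of_int k) = t - of_int k" by simp
      then show ?thesis by (simp add: frac_def)
    qed
    show ?thesis by (rule continuous_on_eq[OF c1]) (auto simp: e1)
  qed
  show ?thesis
  proof (clarsimp simp: continuous_on_eq_continuous_within)
    fix \<tau> t :: real assume "0 \<le> \<tau>" "\<tau> \<le> 1"
    define n where "n = \<lceil>\<bar>t\<bar>\<rceil> + 1"
    have "t < of_int n" "- of_int n < t" unfolding n_def by linarith+
    have cn: "continuous_on ({0..1::real}\<times>{- of_int n..of_int n}) (\<lambda>(\<tau>,t). H(\<tau>, frac t))"
    proof -
      have "{0..1::real}\<times>{- of_int n..of_int n} = (\<Union>k\<in>{-n..<n}. {0..1::real}\<times>{of_int k..of_int k + 1::real})"
      proof (rule set_eqI, rule iffI)
        fix x :: "real \<times> real" assume x: "x \<in> {0..1::real}\<times>{- of_int n..of_int n}"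
        obtain a b where ab: "x = (a,b)" by fastforce
        have "\<exists>k\<in>{-n..<n}. of_int k \<le> b \<and> b \<le> of_int k + 1"
        proof (cases "b = of_int n")
          case True then show ?thesis using \<open>t < of_int n\<close> \<open>- of_int n < t\<close> by (intro bexI[of _ "n - 1"]) auto
        next
          case False then show ?thesis using x ab
            by (intro bexI[of _ "\<lfloor>b\<rfloor>"]) (auto, linarith+)
        qed
        then show "x \<in> (\<Union>k\<in>{-n..<n}. {0..1::real}\<times>{of_int k..of_int k + 1::real})" using x ab by auto
      next
        fix x :: "real \<times> real" assume "x \<in> (\<Union>k\<in>{-n..<n}. {0..1::real}\<times>{of_int k..of_int k + 1::real})"
        then obtain k where k: "k \<in> {-n..<n}" "x \<in> {0..1}\<times>{of_int k..of_int k + 1::real}" by blast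
        then have "real_of_int (-n) \<le> of_int k" "of_int k + 1 \<le> real_of_int n" by auto
        then show "x \<in> {0..1::real}\<times>{- of_int n..of_int n}" using k by auto
      qed
      moreover have "continuous_on (\<Union>k\<in>{-n..<n}. {0..1::real}\<times>{of_int k..of_int k + 1::real}) (\<lambda>(\<tau>,t). H(\<tau>, frac t))"
        by (rule continuous_on_closed_Union) (auto intro: piece closed_Times)
      ultimately show ?thesis by simp
    qed
    have "(\<tau>,t) \<in> {0..1::real}\<times>{- of_int n..of_int n}" using \<open>0 \<le> \<tau>\<close> \<open>\<tau> \<le> 1\<close> \<open>t < of_int n\<close> \<open>- of_int n < t\<close> by auto
    then have "continuous (at (\<tau>,t) within {0..1::real}\<times>{- of_int n..of_int n}) (\<lambda>(\<tau>,t). H(\<tau>, frac t))"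
      using cn continuous_on_eq_continuous_within by blast
    moreover have "at (\<tau>,t) within {0..1::real}\<times>{- of_int n..of_int n} = at (\<tau>,t) within {0..1}\<times>UNIV"
      by (rule at_within_nhd[of _ "UNIV \<times> {- of_int n<..<of_int n}"])
         (use \<open>t < of_int n\<close> \<open>- of_int n < t\<close> in \<open>auto intro: open_Times\<close>)
    ultimately show "continuous (at (\<tau>,t) within {0..1}\<times>UNIV) (\<lambda>(\<tau>,t). H(\<tau>, frac t))" by simp
  qed
qed

lemma periodic_cont1:
  fixes c :: "real \<Rightarrow> 'b::topological_space"
  assumes "path c" "pathfinish c = pathstart c"
  shows "continuous_on UNIV (\<lambda>t. c (frac t))"
proof -
  have "continuous_on ({0..1}\<times>UNIV) (\<lambda>(\<tau>::real,t). (\<lambda>x. c (snd x)) (\<tau>, frac t))"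
    apply (rule periodic_cont)
    using assms unfolding path_def pathfinish_def pathstart_def
    by (auto intro!: continuous_on_compose2[of "{0..1}" c] continuous_intros)
  moreover have "continuous_on UNIV (\<lambda>t. (0::real,t))" by (auto intro!: continuous_intros)
  ultimately have "continuous_on UNIV ((\<lambda>(\<tau>::real,t). (\<lambda>x. c (snd x)) (\<tau>, frac t)) \<circ> (\<lambda>t. (0::real,t)))"
    by (intro continuous_on_compose) (auto elim: continuous_on_subset)
  then show ?thesis by (simp add: o_def)
qed

lemma cov_from_local:
  fixes G :: "'a::metric_space \<Rightarrow> 'b::metric_space"
  assumes K: "compact K" and contG: "continuous_on K G"
    and A: "A = K \<inter> G -` B"
    and inj: "\<And>a. a \<in> A \<Longrightarrow> \<exists>e>0. inj_on G (K \<inter> ball a e)"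
    and opn: "\<And>W. openin (top_of_set A) W \<Longrightarrow> openin (top_of_set B) (G ` W)"
  shows "covering_space A G (G ` A)" and "\<And>y. y \<in> B \<Longrightarrow> finite (K \<inter> G -` {y})"
proof -
  obtain e where e: "\<And>a. a \<in> A \<Longrightarrow> e a > 0 \<and> inj_on G (K \<inter> ball a (e a))"
    using inj by metis
  have fin: "finite (K \<inter> G -` {y})" if y: "y \<in> B" for y
  proof -
    define \<Phi> where "\<Phi> = K \<inter> G -` {y}"
    have PA: "\<Phi> \<subseteq> A" using A y by (auto simp: \<Phi>_def)
    have "closed {x \<in> K. G x = y}"
      by (rule continuous_closed_preimage_constant[OF contG compact_imp_closed[OF K]])
    moreover have "{x \<in> K. G x = y} = \<Phi>" by (auto simp: \<Phi>_def)
    ultimately have "compact \<Phi>" using K by (metis closed_Int_compact Int_absorb1 \<Phi>_def inf_le1 Int_commute)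
    then obtain D where D: "D \<subseteq> \<Phi>" "finite D" "\<Phi> \<subseteq> (\<Union>x\<in>D. ball x (e x))"
      apply (rule compactE_image[of \<Phi> \<Phi> "\<lambda>x. ball x (e x)"])
      using PA e by (force intro!: bexI)+
    have "\<Phi> \<subseteq> D"
    proof
      fix z assume z: "z \<in> \<Phi>"
      then obtain x where x: "x \<in> D" "z \<in> ball x (e x)" using D by blast
      have "x \<in> A" "x \<in> \<Phi>" using x D PA by auto
      then have "inj_on G (K \<inter> ball x (e x))" using e by blast
      moreover have "x \<in> K \<inter> ball x (e x)" using \<open>x \<in> A\<close> e A by auto
      moreover have "z \<in> K \<inter> ball x (e x)" using z x by (auto simp: \<Phi>_def)
      moreover have "G x = G z" using \<open>x \<in> \<Phi>\<close> z by (auto simp: \<Phi>_def)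
      ultimately have "x = z" by (auto dest: inj_onD)
      then show "z \<in> D" using x by simp
    qed
    then show ?thesis using D finite_subset unfolding \<Phi>_def by blast
  qed
  then show "\<And>y. y \<in> B \<Longrightarrow> finite (K \<inter> G -` {y})" by blast
  show "covering_space A G (G ` A)"
  proof
    show "continuous_on A G" using contG A by (auto intro: continuous_on_subset)
    show "G ` A = G ` A" ..
    fix y assume "y \<in> G ` A"
    then obtain x0 where x0: "x0 \<in> A" "G x0 = y" by blast
    then have yB: "y \<in> B" using A by auto
    define \<Phi> where "\<Phi> = K \<inter> G -` {y}"
    have PA: "\<Phi> \<subseteq> A" using A yB by (auto simp: \<Phi>_def)
    have finP: "finite \<Phi>" using fin yB by (simp add: \<Phi>_def)
    have x0P: "x0 \<in> \<Phi>" using x0 A by (auto simp: \<Phi>_def)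
    define R where "R = e ` \<Phi> \<union> (\<lambda>(x,x'). dist x x' / 2) ` {(x,x'). x \<in> \<Phi> \<and> x' \<in> \<Phi> \<and> x \<noteq> x'}"
    have finR: "finite R" unfolding R_def using finP
      by (intro finite_UnI finite_imageI) (auto intro: finite_subset[OF _ finite_cartesian_product[OF finP finP]])
    have Rne: "R \<noteq> {}" using x0P by (auto simp: R_def)
    have Rpos: "\<forall>u\<in>R. u > 0" using PA e by (auto simp: R_def)
    define r where "r = Min R"
    have r0: "r > 0" using finR Rne Rpos by (simp add: r_def)
    have re: "\<And>x. x \<in> \<Phi> \<Longrightarrow> r \<le> e x" unfolding r_def using finR by (auto simp: R_def)
    have rd: "\<And>x x'. x \<in> \<Phi> \<Longrightarrow> x' \<in> \<Phi> \<Longrightarrow> x \<noteq> x' \<Longrightarrow> 2 * r \<le> dist x x'"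
    proof -
      fix x x' assume "x \<in> \<Phi>" "x' \<in> \<Phi>" "x \<noteq> x'"
      then have "dist x x' / 2 \<in> R" by (auto simp: R_def)
      then have "r \<le> dist x x' / 2" unfolding r_def using finR by (meson Min_le)
      then show "2 * r \<le> dist x x'" by simp
    qed
    define Z where "Z = K - (\<Union>x\<in>\<Phi>. ball x r)"
    have "compact Z" unfolding Z_def using K
      by (intro compact_diff open_UN) auto
    then have cGZ: "closed (G ` Z)"
    proof -
      have "Z \<subseteq> K" by (auto simp: Z_def)
      then have "continuous_on Z G" using contG continuous_on_subset by blast
      then show ?thesis using \<open>compact Z\<close> compact_continuous_image compact_imp_closed by blast
    qed
    have yZ: "y \<notin> G ` Z"
    proof
      assume "y \<in> G ` Z"
      then obtain z where "z \<in> Z" "G z = y" by blast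
      then have "z \<in> \<Phi>" by (auto simp: Z_def \<Phi>_def)
      then show False using \<open>z \<in> Z\<close> r0 by (auto simp: Z_def)
    qed
    define U where "U x = A \<inter> ball x r" for x
    define W where "W = (\<Inter>x\<in>\<Phi>. G ` U x) \<inter> G ` A - G ` Z"
    have oU: "openin (top_of_set (G ` A)) (G ` U x)" for x
    proof -
      have "openin (top_of_set A) (U x)" unfolding U_def by (simp add: openin_open_Int)
      then have "openin (top_of_set B) (G ` U x)" by (rule opn)
      moreover have "G ` U x \<subseteq> G ` A" by (auto simp: U_def)
      moreover have "G ` A \<subseteq> B" using A by auto
      ultimately show ?thesis by (meson openin_subset_trans)
    qed
    have oW: "openin (top_of_set (G ` A)) W"
    proof -
      have "openin (top_of_set (G ` A)) ((\<Inter>x\<in>\<Phi>. G ` U x) \<inter> topspace (top_of_set (G ` A)))"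
        using finP oU by blast
      then have o1: "openin (top_of_set (G ` A)) ((\<Inter>x\<in>\<Phi>. G ` U x) \<inter> G ` A)" by simp
      have c1: "closedin (top_of_set (G ` A)) (G ` A \<inter> G ` Z)"
        using cGZ by (simp add: closedin_closed_Int)
      show ?thesis
      proof -
        have "W = ((\<Inter>x\<in>\<Phi>. G ` U x) \<inter> G ` A) - (G ` A \<inter> G ` Z)" by (auto simp: W_def)
        then show ?thesis using openin_diff o1 c1 by metis
      qed
    qed
    have "y \<in> G ` U x" if "x \<in> \<Phi>" for x
    proof
      show "y = G x" using that by (auto simp: \<Phi>_def)
      show "x \<in> U x" using that PA r0 by (auto simp: U_def)
    qed
    then have yW: "y \<in> W" unfolding W_def using yZ x0 by auto
    define v where "v = (\<lambda>x. U x \<inter> G -` W) ` \<Phi>"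
    show "\<exists>T. y \<in> T \<and> openin (top_of_set (G ` A)) T \<and>
             (\<exists>v. \<Union>v = A \<inter> G -` T \<and> (\<forall>u\<in>v. openin (top_of_set A) u) \<and>
                  pairwise disjnt v \<and> (\<forall>u\<in>v. \<exists>q. homeomorphism u T G q))"
    proof (intro exI conjI)
      show "y \<in> W" by (rule yW)
      show "openin (top_of_set (G ` A)) W" by (rule oW)
      show "\<Union>v = A \<inter> G -` W"
      proof
        show "\<Union>v \<subseteq> A \<inter> G -` W" by (auto simp: v_def U_def)
        show "A \<inter> G -` W \<subseteq> \<Union>v"
        proof
          fix a assume a: "a \<in> A \<inter> G -` W"
          then have "a \<notin> Z" unfolding W_def by auto
          moreover have "a \<in> K" using a A by auto
          ultimately obtain x where "x \<in> \<Phi>" "a \<in> ball x r" by (auto simp: Z_def)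
          then show "a \<in> \<Union>v" using a by (auto simp: v_def U_def)
        qed
      qed
      have cA: "continuous_on A G" using contG A by (auto intro: continuous_on_subset)
      show "\<forall>u\<in>v. openin (top_of_set A) u"
      proof
        fix u assume "u \<in> v"
        then obtain x where u: "u = U x \<inter> G -` W" by (auto simp: v_def)
        have "openin (top_of_set A) (A \<inter> G -` W)"
          using continuous_openin_preimage[OF cA _ oW] by auto
        moreover have "openin (top_of_set A) (U x)" unfolding U_def by (simp add: openin_open_Int)
        moreover have "u = U x \<inter> (A \<inter> G -` W)" by (auto simp: u U_def)
        ultimately show "openin (top_of_set A) u" using openin_Int by metis
      qed
      show "pairwise disjnt v"
        unfolding pairwise_def disjnt_def v_def
      proof (clarify)
        fix x x' assume "x \<in> \<Phi>" "x' \<in> \<Phi>" "U x \<inter> G -` W \<noteq> U x' \<inter> G -` W"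
        then have "x \<noteq> x'" by auto
        then have "2 * r \<le> dist x x'" using rd \<open>x \<in> \<Phi>\<close> \<open>x' \<in> \<Phi>\<close> by blast
        then have "ball x r \<inter> ball x' r = {}"
        proof (auto simp: disjoint_iff)
          fix z assume "dist x z < r" "dist x' z < r"
          moreover have "dist x x' \<le> dist x z + dist x' z" by (metis dist_commute dist_triangle)
          ultimately show False using \<open>2 * r \<le> dist x x'\<close> by linarith
        qed
        then show "U x \<inter> G -` W \<inter> (U x' \<inter> G -` W) = {}" by (auto simp: U_def)
      qed
      show "\<forall>u\<in>v. \<exists>q. homeomorphism u W G q"
      proof
        fix u assume "u \<in> v"
        then obtain x where x: "x \<in> \<Phi>" and u: "u = U x \<inter> G -` W" by (auto simp: v_def)
        have xA: "x \<in> A" using x PA by auto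
        have injx: "inj_on G u"
        proof -
          have "u \<subseteq> K \<inter> ball x (e x)" using re[OF x] A by (auto simp: u U_def)
          then show ?thesis using e[OF xA] inj_on_subset by blast
        qed
        have imu: "G ` u = W"
        proof
          show "G ` u \<subseteq> W" by (auto simp: u)
          show "W \<subseteq> G ` u"
          proof
            fix w assume "w \<in> W"
            then have "w \<in> G ` U x" unfolding W_def using x by auto
            then obtain a where "a \<in> U x" "G a = w" by blast
            then show "w \<in> G ` u" using \<open>w \<in> W\<close> by (auto simp: u)
          qed
        qed
        have uA: "u \<subseteq> A" by (auto simp: u U_def)
        have ouA: "openin (top_of_set A) u"
        proof -
          have "openin (top_of_set A) (A \<inter> G -` W)"
            using continuous_openin_preimage[OF cA _ oW] by auto
          moreover have "openin (top_of_set A) (U x)" unfolding U_def by (simp add: openin_open_Int)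
          moreover have "u = U x \<inter> (A \<inter> G -` W)" by (auto simp: u U_def)
          ultimately show ?thesis using openin_Int by metis
        qed
        show "\<exists>q. homeomorphism u W G q"
        proof (rule homeomorphism_injective_open_map[OF _ imu injx])
          show "continuous_on u G" using cA uA continuous_on_subset by blast
          fix V assume V: "openin (top_of_set u) V"
          then have "openin (top_of_set A) V" using ouA openin_trans by blast
          then have "openin (top_of_set B) (G ` V)" by (rule opn)
          moreover have "G ` V \<subseteq> W" using V imu openin_imp_subset by blast
          moreover have "W \<subseteq> B" using imu uA A by auto
          ultimately show "openin (top_of_set W) (G ` V)" by (meson openin_subset_trans)
        qed blast
      qed
    qed
  qed
qed

lemma frac_inj_loop:
  assumes "simple_path c" "c (frac a) = c (frac b)"
  shows "\<exists>j::int. b = a + of_int j"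
proof -
  have "frac a \<in> {0..1}" "frac b \<in> {0..1}" using frac_lt_1 less_imp_le by auto
  then have "frac a = frac b" using assms frac_lt_1[of a] frac_lt_1[of b]
    unfolding simple_path_def loop_free_def by fastforce
  then have "b = a + of_int (\<lfloor>b\<rfloor> - \<lfloor>a\<rfloor>)" by (simp add: frac_def)
  then show ?thesis by blast
qed

lemma periodic_int:
  fixes l :: "real \<Rightarrow> 'a"
  assumes "\<And>t. l (t + m) = l t"
  shows "l (t + of_int k * m) = l t"
proof -
  have pos: "l (t + of_nat n * m) = l t" for n t
  proof (induction n arbitrary: t)
    case (Suc n)
    have "l (t + of_nat (Suc n) * m) = l ((t + of_nat n * m) + m)" by (simp add: algebra_simps)
    also have "... = l t" using assms Suc by simp
    finally show ?case .
  qed simp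
  show ?thesis
  proof (cases "k \<ge> 0")
    case True then show ?thesis using pos[of t "nat k"] by simp
  next
    case False
    then have "l (t + of_int k * m) = l ((t + of_int k * m) + of_nat (nat (-k)) * m)" using pos by metis
    also have "... = l t" using False by (simp add: algebra_simps)
    finally show ?thesis .
  qed
qed

lemma c_frac_eq:
  assumes "pathfinish c = pathstart c" "t \<in> {0..1}"
  shows "c (frac t) = c t"
proof (cases "t = 1")
  case True then show ?thesis using assms by (simp add: pathfinish_def pathstart_def)
next
  case False then show ?thesis using assms by simp
qed

lemma path_image_frac:
  assumes "pathfinish c = pathstart c"
  shows "path_image c = (\<lambda>t. c (frac t)) ` {a..a+1}" and "path_image c = range (\<lambda>t. c (frac t))"
proof -
  have 1: "path_image c \<subseteq> (\<lambda>t. c (frac t)) ` {a..a+1}" for a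
  proof
    fix y assume "y \<in> path_image c"
    then obtain t where t: "t \<in> {0..1}" "y = c t" by (auto simp: path_image_def)
    define u where "u = a + frac (t - a)"
    have "frac u = frac t"
    proof -
      have "u = t - of_int \<lfloor>t - a\<rfloor>" unfolding u_def by (simp add: frac_def)
      moreover have "t - of_int \<lfloor>t - a\<rfloor> = t + of_int (- \<lfloor>t - a\<rfloor>)" by simp
      ultimately show ?thesis by (metis frac_add_of_int_right)
    qed
    moreover have "u \<in> {a..a+1}" unfolding u_def using frac_lt_1[of "t-a"] by auto
    ultimately show "y \<in> (\<lambda>t. c (frac t)) ` {a..a+1}" using t c_frac_eq[OF assms t(1)] by force
  qed
  have 2: "range (\<lambda>t. c (frac t)) \<subseteq> path_image c"
  proof (clarsimp simp: path_image_def)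
    fix t show "c (frac t) \<in> c ` {0..1}" using frac_lt_1[of t] frac_ge_0[of t] by (intro imageI) auto
  qed
  show "path_image c = (\<lambda>t. c (frac t)) ` {a..a+1}" using 1 2 by blast
  show "path_image c = range (\<lambda>t. c (frac t))" using 1 2 by blast
qed

lemma slice_simple:
  fixes l :: "real \<Rightarrow> 'a::topological_space" and c :: "real \<Rightarrow> 'b::topological_space"
    and G :: "'a \<Rightarrow> 'b" and m :: nat
  assumes c: "simple_path c"
    and lc: "continuous_on UNIV l" and lG: "\<And>t. G (l t) = c (frac t)"
    and m: "0 < m" and per: "\<And>t. l (t + real m) = l t"
    and minl: "\<And>j t. 0 < j \<Longrightarrow> j < m \<Longrightarrow> l (t + real j) \<noteq> l t"
  shows "simple_path (\<lambda>u. l (real m * u))"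
    and "pathfinish (\<lambda>u. l (real m * u)) = pathstart (\<lambda>u. l (real m * u))"
    and "path_image (\<lambda>u. l (real m * u)) = range l"
proof -
  have key: "u = v \<or> u = 0 \<and> v = 1" if uv: "u \<in> {0..1}" "v \<in> {0..1}" "u \<le> v"
     and eq: "l (real m * u) = l (real m * v)" for u v
  proof -
    have "c (frac (real m * u)) = c (frac (real m * v))" using eq lG by metis
    then obtain j :: int where j: "real m * v = real m * u + of_int j" using frac_inj_loop[OF c] by blast
    have jv: "of_int j = real m * (v - u)" using j by (simp add: algebra_simps)
    have "real m * (v - u) \<ge> 0" using uv by simp
    then have "j \<ge> 0" using jv by linarith
    have "v - u \<le> 1" using uv by auto
    then have "real m * (v - u) \<le> real m * 1" by (intro mult_left_mono) auto
    then have "of_int j \<le> real m" using jv by simp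
    then have "j \<le> int m" by linarith
    show ?thesis
    proof (cases "j = 0")
      case True then show ?thesis using j m by simp
    next
      case False
      show ?thesis
      proof (cases "j = int m")
        case True
        then have "real m * (v - u) = real m" using j by (simp add: algebra_simps)
        then have "v - u = 1" using m by simp
        then show ?thesis using uv by auto
      next
        case False
        then have "0 < nat j" "nat j < m" using \<open>j \<noteq> 0\<close> \<open>j \<ge> 0\<close> \<open>j \<le> int m\<close> by auto
        moreover have "l (real m * u + real (nat j)) = l (real m * u)" using j eq \<open>j \<ge> 0\<close> by simp
        ultimately show ?thesis using minl by blast
      qed
    qed
  qed
  have pl: "path (\<lambda>u. l (real m * u))" unfolding path_def
    by (rule continuous_on_compose2[OF lc]) (auto intro!: continuous_intros)
  show "simple_path (\<lambda>u. l (real m * u))"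
    unfolding simple_path_def loop_free_def
  proof (intro conjI pl ballI impI)
    fix u v :: real assume uv: "u \<in> {0..1}" "v \<in> {0..1}" "l (real m * u) = l (real m * v)"
    show "u = v \<or> u = 0 \<and> v = 1 \<or> u = 1 \<and> v = 0"
    proof (cases "u \<le> v")
      case True then show ?thesis using key uv by blast
    next
      case False then show ?thesis using key[of v u] uv by force
    qed
  qed
  show "pathfinish (\<lambda>u. l (real m * u)) = pathstart (\<lambda>u. l (real m * u))"
    using per[of 0] by (simp add: pathfinish_def pathstart_def)
  show "path_image (\<lambda>u. l (real m * u)) = range l"
  proof
    show "path_image (\<lambda>u. l (real m * u)) \<subseteq> range l" by (auto simp: path_image_def)
    show "range l \<subseteq> path_image (\<lambda>u. l (real m * u))"
    proof clarify
      fix t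
      define k where "k = \<lfloor>t / real m\<rfloor>"
      define r where "r = t - of_int k * real m"
      have "l t = l (r + of_int k * real m)" by (simp add: r_def)
      also have "... = l r" by (rule periodic_int[of l "real m", OF per])
      finally have lt: "l t = l r" .
      have "of_int k \<le> t / real m" "t / real m < of_int k + 1" unfolding k_def by linarith+
      then have "of_int k * real m \<le> t" "t < (of_int k + 1) * real m" using m by (simp_all add: field_simps)
      then have r01: "r / real m \<in> {0..1}" using m by (auto simp: r_def field_simps)
      have "l t = l (real m * (r / real m))" using lt m by simp
      then show "l t \<in> path_image (\<lambda>u. l (real m * u))" unfolding path_image_def using r01 by (rule image_eqI)
    qed
  qed
qed

lemma Q_open:
  fixes c :: "real \<Rightarrow> 'b::t2_space"
  assumes c: "simple_path c" and cl: "pathfinish c = pathstart c" and d: "0 < d" "d \<le> 1/4"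
  shows "openin (top_of_set (path_image c)) ((\<lambda>t. c (frac t)) ` ball s d)"
proof -
  define Q where "Q = (\<lambda>t. c (frac t))"
  have cQ: "continuous_on UNIV Q" unfolding Q_def
    by (rule periodic_cont1) (use c cl in \<open>auto simp: simple_path_def\<close>)
  define Cl where "Cl = Q ` {s+d..s+1-d}"
  have "compact Cl" unfolding Cl_def by (rule compact_continuous_image) (auto intro: continuous_on_subset[OF cQ])
  then have clC: "closed Cl" by (rule compact_imp_closed)
  have Qper: "Q (t + 1) = Q t" for t by (simp add: Q_def frac_1_eq)
  have eq: "Q ` ball s d = path_image c - Cl"
  proof
    show "Q ` ball s d \<subseteq> path_image c - Cl"
    proof
      fix y assume "y \<in> Q ` ball s d"
      then obtain t where t: "t \<in> ball s d" and yt: "y = Q t" by blast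
      show "y \<in> path_image c - Cl"
      proof
        show "y \<in> path_image c" using path_image_frac(2)[OF cl] yt by (auto simp: Q_def)
        show "y \<notin> Cl"
        proof
          assume "y \<in> Cl"
          then obtain t' where t': "t' \<in> {s+d..s+1-d}" "Q t' = Q t" using yt by (auto simp: Cl_def)
          then obtain j :: int where j: "t' = t + of_int j" using frac_inj_loop[OF c, of t t'] by (auto simp: Q_def)
          have "0 < (of_int j::real)" "of_int j < (1::real)" using t t' j d by (auto simp: dist_real_def abs_less_iff)
          then have "0 < j" "j < 1" by simp_all
          then show False by linarith
        qed
      qed
    qed
    show "path_image c - Cl \<subseteq> Q ` ball s d"
    proof clarify
      fix y assume y: "y \<in> path_image c" "y \<notin> Cl"
      then obtain t where t: "t \<in> {s-d..s-d+1}" "y = Q t"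
        using path_image_frac(1)[OF cl, of "s-d"] by (auto simp: Q_def)
      show "y \<in> Q ` ball s d"
      proof (cases "\<bar>t - s\<bar> < d")
        case True then show ?thesis using t by (auto simp: dist_real_def)
      next
        case False
        show ?thesis
        proof (cases "t = s - d")
          case True
          then have "y = Q (s - d)" using t by simp
          then have "y = Q (s + 1 - d)" using Qper[of "s-d"] by (simp add: algebra_simps)
          moreover have "s + 1 - d \<in> {s+d..s+1-d}" using d by auto
          ultimately show ?thesis using y by (auto simp: Cl_def)
        next
          case False
          then have "t \<in> {s+d..s+1-d}" using t \<open>\<not> \<bar>t - s\<bar> < d\<close> by auto
          then show ?thesis using y t by (auto simp: Cl_def)
        qed
      qed
    qed
  qed
  show ?thesis unfolding Q_def[symmetric] eq
    by (metis Diff_eq clC open_Compl openin_open_Int)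
qed

lemma clopen_component:
  assumes "openin (top_of_set E) R" "closedin (top_of_set E) R" "connected R" "x \<in> R"
  shows "connected_component_set E x = R"
proof
  have RE: "R \<subseteq> E" using assms(1) openin_imp_subset by blast
  show "R \<subseteq> connected_component_set E x" using connected_component_maximal[OF assms(4,3) RE] .
  define C0 where "C0 = connected_component_set E x"
  have C0E: "C0 \<subseteq> E" unfolding C0_def by (rule connected_component_subset)
  have "openin (top_of_set C0) (C0 \<inter> R)"
  proof -
    obtain Ob where "open Ob" "R = E \<inter> Ob" using assms(1) openin_open by metis
    then have "C0 \<inter> R = C0 \<inter> Ob" using C0E by blast
    then show ?thesis using \<open>open Ob\<close> openin_open by metis
  qed
  moreover have "closedin (top_of_set C0) (C0 \<inter> R)"
  proof -
    obtain Ob where "closed Ob" "R = E \<inter> Ob" using assms(2) closedin_closed by metis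
    then have "C0 \<inter> R = C0 \<inter> Ob" using C0E by blast
    then show ?thesis using \<open>closed Ob\<close> closedin_closed by metis
  qed
  moreover have "connected C0" unfolding C0_def by simp
  moreover have "x \<in> C0 \<inter> R" using assms(4) RE unfolding C0_def by auto
  ultimately have "C0 \<inter> R = C0" unfolding connected_clopen by blast
  then show "connected_component_set E x \<subseteq> R" unfolding C0_def by blast
qed

lemma lift_main:
  fixes G :: "'a::real_normed_vector \<Rightarrow> 'b::real_normed_vector"
  assumes cov: "covering_space A G T"
    and finfib: "\<And>y. y \<in> T \<Longrightarrow> finite (A \<inter> G -` {y})"
    and p: "simple_path p" and q: "simple_path q"
    and hom: "homotopic_loops T p q"
    and x: "x \<in> A" "G x \<in> path_image q"
  shows "\<exists>p' q'. simple_path p' \<and> pathfinish p' = pathstart p' \<and> G ` path_image p' \<subseteq> path_image p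
     \<and> simple_path q' \<and> pathfinish q' = pathstart q'
     \<and> path_image q' = connected_component_set (A \<inter> G -` path_image q) x
     \<and> homotopic_loops A p' q'"
proof -
  obtain H where H: "continuous_on ({0..1::real}\<times>{0..1::real}) H" "H \<in> ({0..1}\<times>{0..1}) \<rightarrow> T"
      "\<forall>x\<in>{0..1}. H(0,x) = p x" "\<forall>x\<in>{0..1}. H(1,x) = q x"
      "\<forall>t\<in>{0..1}. pathfinish(H \<circ> Pair t) = pathstart(H \<circ> Pair t)"
    using hom[unfolded homotopic_loops] by blast
  have Hl: "\<And>\<tau>. \<tau> \<in> {0..1} \<Longrightarrow> H(\<tau>,1) = H(\<tau>,0)" using H(5) by (auto simp: pathfinish_def pathstart_def)
  have pl: "pathfinish p = pathstart p" and ql: "pathfinish q = pathstart q"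
    using homotopic_loops_imp_loop[OF hom] by auto
  define D where "D = {0..1::real} \<times> (UNIV::real set)"
  define K where "K = (\<lambda>(\<tau>,t). H(\<tau>, frac t))"
  have cK: "continuous_on D K" unfolding D_def K_def by (rule periodic_cont[OF H(1) Hl])
  have fr01: "frac t \<in> {0..1}" for t using frac_lt_1[of t] by auto
  have KT: "K \<in> D \<rightarrow> T"
  proof
    fix y assume "y \<in> D"
    then have "(fst y, frac (snd y)) \<in> {0..1}\<times>{0..1}" using fr01 by (auto simp: D_def)
    then show "K y \<in> T" using H(2) by (auto simp: K_def case_prod_beta)
  qed
  obtain t0 where t0: "t0 \<in> {0..1}" "q t0 = G x" using x(2) by (auto simp: path_image_def)
  have K1: "K (1,t0) = G x"
  proof -
    have "K (1,t0) = q (frac t0)" using H(4) fr01[of t0] by (simp add: K_def)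
    then show ?thesis using c_frac_eq[OF ql t0(1)] t0 by simp
  qed
  have D1: "(1,t0) \<in> D" by (simp add: D_def)
  have cvD: "convex D" unfolding D_def by (intro convex_Times) auto
  obtain L where L: "continuous_on D L" "L \<in> D \<rightarrow> A" "L (1,t0) = x" "\<And>y. y \<in> D \<Longrightarrow> G (L y) = K y"
    using covering_space_lift_strong[OF cov x(1) D1 convex_imp_simply_connected[OF cvD]
        convex_imp_locally_path_connected[OF cvD] cK KT] K1 by metis
  have Kper: "K (\<tau>, t + of_int j) = K (\<tau>, t)" for \<tau> t j by (simp add: K_def)
  have uniq: "\<forall>y\<in>D. L (fst y, snd y + of_int j) = L y"
    if a: "a \<in> D" "L (fst a, snd a + of_int j) = L a" for a j
  proof
    fix y assume y: "y \<in> D"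
    have sh: "(\<lambda>y. (fst y, snd y + of_int j)) ` D \<subseteq> D" by (auto simp: D_def)
    have c1: "continuous_on D (\<lambda>y. L (fst y, snd y + of_int j))"
      by (rule continuous_on_compose2[OF L(1) _ sh]) (auto intro!: continuous_intros)
    have m1: "(\<lambda>y. L (fst y, snd y + of_int j)) \<in> D \<rightarrow> A" using L(2) sh by auto
    have e1: "K z = G (L (fst z, snd z + of_int j))" if "z \<in> D" for z
    proof -
      have "(fst z, snd z + of_int j) \<in> D" using that by (auto simp: D_def)
      then have "G (L (fst z, snd z + of_int j)) = K (fst z, snd z + of_int j)" using L(4) by blast
      also have "... = K z" using Kper[of "fst z" "snd z" j] by simp
      finally show ?thesis by simp
    qed
    show "L (fst y, snd y + of_int j) = L y"
      by (rule covering_space_lift_unique[OF cov a(2) cK KT c1 m1 e1 L(1) L(2) _ convex_connected[OF cvD] a(1) y])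
         (use L(4) in auto)
  qed
  define Pd where "Pd n \<longleftrightarrow> 0 < n \<and> (\<forall>y\<in>D. L (fst y, snd y + real n) = L y)" for n :: nat
  have "\<exists>n. Pd n"
  proof -
    have GxT: "G x \<in> T" using K1 KT D1 by force
    define \<Phi> where "\<Phi> = A \<inter> G -` {G x}"
    have finP: "finite \<Phi>" unfolding \<Phi>_def using finfib[OF GxT] .
    define f where "f n = L (1, t0 + real n)" for n :: nat
    have fP: "f ` {0..card \<Phi>} \<subseteq> \<Phi>"
    proof clarify
      fix n :: nat
      have "(1, t0 + real n) \<in> D" by (simp add: D_def)
      then have "f n \<in> A" "G (f n) = K (1, t0 + of_int (int n))" using L(2,4) by (auto simp: f_def)
      then show "f n \<in> \<Phi>" using Kper[of 1 t0 "int n"] K1 by (simp add: \<Phi>_def)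
    qed
    have "\<not> inj_on f {0..card \<Phi>}"
    proof
      assume "inj_on f {0..card \<Phi>}"
      then have "card {0..card \<Phi>} \<le> card \<Phi>" using card_inj_on_le[OF _ fP finP] by blast
      then show False by simp
    qed
    then obtain a b where ab: "a \<in> {0..card \<Phi>}" "b \<in> {0..card \<Phi>}" "a \<noteq> b" "f a = f b"
      unfolding inj_on_def by blast
    have "\<exists>a b. a < b \<and> f a = f b"
    proof (cases "a < b")
      case True then show ?thesis using ab by blast
    next
      case False then have "b < a" using ab by simp
      then show ?thesis using ab by metis
    qed
    then obtain a b where ab: "a < b" "f a = f b" by blast
    have aD: "(1, t0 + real a) \<in> D" by (simp add: D_def)
    have "L (fst (1, t0 + real a), snd (1, t0 + real a) + of_int (int (b - a))) = L (1, t0 + real a)"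
      using ab by (simp add: f_def of_nat_diff algebra_simps)
    then have "\<forall>y\<in>D. L (fst y, snd y + of_int (int (b - a))) = L y" by (rule uniq[OF aD])
    then have "Pd (b - a)" using ab by (simp add: Pd_def)
    then show ?thesis by blast
  qed
  define m where "m = (LEAST n. Pd n)"
  have Pm: "Pd m" unfolding m_def using \<open>\<exists>n. Pd n\<close> by (rule LeastI_ex)
  then have m0: "0 < m" and mper: "\<And>y. y \<in> D \<Longrightarrow> L (fst y, snd y + real m) = L y" by (auto simp: Pd_def)
  have minl: "L (\<tau>, t + real j) \<noteq> L (\<tau>, t)" if "0 < j" "j < m" "\<tau> \<in> {0..1}" for j \<tau> t
  proof
    assume eq: "L (\<tau>, t + real j) = L (\<tau>, t)"
    have "(\<tau>, t) \<in> D" using that by (simp add: D_def)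
    then have "\<forall>y\<in>D. L (fst y, snd y + of_int (int j)) = L y" by (intro uniq) (use eq in auto)
    then have "Pd j" using that by (simp add: Pd_def)
    then have "m \<le> j" unfolding m_def by (rule Least_le)
    then show False using that by simp
  qed
  define lp where "lp t = L (0, t)" for t
  define lq where "lq t = L (1, t)" for t
  have clp: "continuous_on UNIV lp" unfolding lp_def
    by (rule continuous_on_compose2[OF L(1)]) (auto simp: D_def intro!: continuous_intros)
  have clq: "continuous_on UNIV lq" unfolding lq_def
    by (rule continuous_on_compose2[OF L(1)]) (auto simp: D_def intro!: continuous_intros)
  have lpA: "lp t \<in> A" and lqA: "lq t \<in> A" for t using L(2) by (auto simp: lp_def lq_def D_def)
  have Glp: "G (lp t) = p (frac t)" for t using L(4)[of "(0,t)"] H(3) fr01[of t] by (simp add: lp_def D_def K_def)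
  have Glq: "G (lq t) = q (frac t)" for t using L(4)[of "(1,t)"] H(4) fr01[of t] by (simp add: lq_def D_def K_def)
  have perp: "lp (t + real m) = lp t" for t using mper[of "(0,t)"] by (simp add: lp_def D_def)
  have perq: "lq (t + real m) = lq t" for t using mper[of "(1,t)"] by (simp add: lq_def D_def)
  have minp: "lp (t + real j) \<noteq> lp t" if "0 < j" "j < m" for j t using minl that by (simp add: lp_def)
  have minq: "lq (t + real j) \<noteq> lq t" if "0 < j" "j < m" for j t using minl that by (simp add: lq_def)
  note sp = slice_simple[OF p clp Glp m0 perp minp]
  note sq = slice_simple[OF q clq Glq m0 perq minq]
  define E where "E = A \<inter> G -` path_image q"
  have rE: "range lq \<subseteq> E" using lqA Glq path_image_frac(2)[OF ql] by (auto simp: E_def)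
  have xr: "x \<in> range lq" using L(3) by (auto simp: lq_def)
  have conr: "connected (range lq)" by (rule connected_continuous_image[OF clq connected_UNIV])
  have clr: "closedin (top_of_set E) (range lq)"
  proof -
    have "compact (range lq)" using sq(3)[symmetric] sq(1) by (metis compact_simple_path_image)
    then have "closed (range lq)" by (rule compact_imp_closed)
    then show ?thesis using rE by (metis closedin_closed inf.absorb_iff2)
  qed
  have cGE: "continuous_on E G" using covering_space_imp_continuous[OF cov] by (rule continuous_on_subset) (auto simp: E_def)
  have opr: "openin (top_of_set E) (range lq)"
  proof (rule openin_subopen[THEN iffD2], intro ballI)
    fix y assume "y \<in> range lq"
    then obtain s where ys: "y = lq s" by blast
    obtain T0 u \<phi> where T0: "y \<in> T0" "openin (top_of_set A) T0" "G y \<in> u" "openin (top_of_set T) u"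
        "homeomorphism T0 u G \<phi>"
      using covering_space_local_homeomorphism[OF cov lqA[of s]] ys by metis
    have injT0: "inj_on G T0" using T0(5) by (metis homeomorphism_def inj_on_inverseI)
    obtain Ob where Ob: "open Ob" "T0 = A \<inter> Ob" using T0(2) openin_open by metis
    have "open (lq -` Ob)" using continuous_on_open_vimage[OF open_UNIV] clq Ob(1) by auto
    moreover have "s \<in> lq -` Ob" using T0(1) Ob ys by auto
    ultimately obtain d' where d': "d' > 0" "ball s d' \<subseteq> lq -` Ob" by (meson openE)
    define d where "d = min d' (1/4)"
    have d: "0 < d" "d \<le> 1/4" "d \<le> d'" using d' by (auto simp: d_def)
    define V where "V = (\<lambda>t. q (frac t)) ` ball s d"
    have oV: "openin (top_of_set (path_image q)) V" unfolding V_def by (rule Q_open[OF q ql d(1,2)])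
    then obtain Ob2 where Ob2: "open Ob2" "V = path_image q \<inter> Ob2" using openin_open by metis
    define W where "W = T0 \<inter> G -` V"
    have W_eq: "W = (E \<inter> G -` Ob2) \<inter> (E \<inter> Ob)" using Ob Ob2 by (auto simp: W_def E_def)
    have "openin (top_of_set E) (E \<inter> G -` Ob2)" by (rule continuous_openin_preimage_gen[OF cGE Ob2(1)])
    moreover have "openin (top_of_set E) (E \<inter> Ob)" using Ob(1) openin_open by blast
    ultimately have oW: "openin (top_of_set E) W" unfolding W_eq by (rule openin_Int)
    have yW: "y \<in> W" using T0(1) Glq d(1) ys by (auto simp: W_def V_def)
    have Wr: "W \<subseteq> range lq"
    proof
      fix z assume "z \<in> W"
      then obtain t where t: "t \<in> ball s d" "G z = q (frac t)" "z \<in> T0" by (auto simp: W_def V_def)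
      have "t \<in> ball s d'" using d(3) t(1) by auto
      then have "lq t \<in> Ob" using d'(2) by auto
      then have "lq t \<in> T0" using Ob lqA by auto
      moreover have "G (lq t) = G z" using Glq t by simp
      ultimately have "z = lq t" using injT0 t(3) by (metis inj_onD)
      then show "z \<in> range lq" by simp
    qed
    show "\<exists>W. openin (top_of_set E) W \<and> y \<in> W \<and> W \<subseteq> range lq" using oW yW Wr by blast
  qed
  have comp: "connected_component_set E x = range lq" by (rule clopen_component[OF opr clr conr xr])
  have hl: "homotopic_loops A (\<lambda>u. lp (real m * u)) (\<lambda>u. lq (real m * u))"
    unfolding homotopic_loops
  proof (intro exI conjI ballI)
    define h where "h = (\<lambda>z::real\<times>real. L (fst z, real m * snd z))"
    have sh: "(\<lambda>z::real\<times>real. (fst z, real m * snd z)) ` ({0..1}\<times>{0..1}) \<subseteq> D" by (auto simp: D_def)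
    show "continuous_on ({0..1}\<times>{0..1}) h" unfolding h_def
      by (rule continuous_on_compose2[OF L(1) _ sh]) (auto intro!: continuous_intros)
    show "h \<in> {0..1}\<times>{0..1} \<rightarrow> A" using L(2) sh by (auto simp: h_def)
    fix u :: real
    show "h (0, u) = lp (real m * u)" by (simp add: h_def lp_def)
    show "h (1, u) = lq (real m * u)" by (simp add: h_def lq_def)
  next
    fix \<tau> :: real assume "\<tau> \<in> {0..1}"
    then show "pathfinish ((\<lambda>z. L (fst z, real m * snd z)) \<circ> Pair \<tau>) = pathstart ((\<lambda>z. L (fst z, real m * snd z)) \<circ> Pair \<tau>)"
      using mper[of "(\<tau>,0)"] by (simp add: pathfinish_def pathstart_def D_def)
  qed
  have "G ` path_image (\<lambda>u. lp (real m * u)) \<subseteq> path_image p"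
    using sp(3) Glp path_image_frac(2)[OF pl] by auto
  then show ?thesis using sp sq comp hl unfolding E_def
    by (intro exI[of _ "\<lambda>u. lp (real m * u)"] exI[of _ "\<lambda>u. lq (real m * u)"]) simp
qed

abbreviation SS :: "(real \<times> real \<times> real) set" where "SS \<equiv> sphere 0 1"

definition ist :: "real \<times> real \<times> real \<Rightarrow> complex option" where
  "ist s = (if snd (snd s) = 1 then None
            else Some (Complex (fst s / (1 - snd (snd s))) (fst (snd s) / (1 - snd (snd s)))))"

lemma in_SS: "(a,b,c) \<in> SS \<longleftrightarrow> a^2 + b^2 + c^2 = 1"
  by (simp add: norm_Pair add.assoc)

lemma sq_lemma:
  fixes x y r :: real
  assumes "r = x^2 + y^2"
  shows "(2 * x / (r + 1))^2 + (2 * y / (r + 1))^2 = 4 * r / (r + 1)^2"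
  using assms by (simp add: power_divide power_mult_distrib add_divide_distrib[symmetric] algebra_simps)

lemma st_Some: "st (Some z) = (2 * Re z / ((cmod z)^2 + 1), 2 * Im z / ((cmod z)^2 + 1),
                  ((cmod z)^2 - 1) / ((cmod z)^2 + 1))"
  by (simp add: st_def)

lemma st_None: "st None = (0,0,1)" by (simp add: st_def)

lemma st_in_SS: "st w \<in> SS"
proof (cases w)
  case None then show ?thesis by (simp add: st_None in_SS)
next
  case (Some z)
  define r where "r = (cmod z)^2"
  have r: "r = (Re z)^2 + (Im z)^2" unfolding r_def by (simp add: cmod_power2)
  have r0: "r + 1 \<noteq> 0" unfolding r_def by (smt (verit) zero_le_power2)
  have "4 * r / (r + 1)^2 + ((r - 1) / (r + 1))^2 = (4 * r + (r - 1)^2) / (r + 1)^2"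
    by (simp add: power_divide add_divide_distrib)
  also have "4 * r + (r - 1)^2 = (r + 1)^2" by algebra
  finally have "4 * r / (r + 1)^2 + ((r - 1) / (r + 1))^2 = 1" using r0 by simp
  then have "(2 * Re z / (r + 1))^2 + (2 * Im z / (r + 1))^2 + ((r - 1) / (r + 1))^2 = 1"
    using sq_lemma[OF r] by simp
  then show ?thesis unfolding Some st_Some in_SS r_def .
qed

lemma ist_st [simp]: "ist (st w) = w"
proof (cases w)
  case None then show ?thesis by (simp add: st_None ist_def)
next
  case (Some z)
  define r where "r = (cmod z)^2"
  have r0: "r + 1 > 0" unfolding r_def by (smt (verit) zero_le_power2)
  have ne: "(r - 1) / (r + 1) \<noteq> 1" using r0 by (simp add: field_simps)
  have d: "1 - (r - 1) / (r + 1) = 2 / (r + 1)" using r0 by (simp add: field_simps)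
  show ?thesis using ne r0 unfolding Some st_Some ist_def r_def[symmetric]
    by (simp add: d complex_eq_iff)
qed

lemma st_inj: "inj st"
  by (metis injI ist_st)

lemma st_eq_iff [simp]: "st v = st w \<longleftrightarrow> v = w"
  using st_inj by (auto dest: injD)

lemma st_ist: assumes "s \<in> SS" shows "st (ist s) = s"
proof -
  obtain a b c where s: "s = (a,b,c)" by (cases s) auto
  have abc: "a^2 + b^2 + c^2 = 1" using assms s in_SS by simp
  show ?thesis
  proof (cases "c = 1")
    case True
    then have "a^2 + b^2 = 0" using abc by simp
    then have "a = 0" "b = 0" by (simp_all add: sum_power2_eq_zero_iff)
    then show ?thesis using True s by (simp add: ist_def st_None)
  next
    case False
    then have c1: "1 - c > 0" using abc by (smt (verit) power2_le_imp_le zero_le_power2 one_power2)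
    define z where "z = Complex (a / (1 - c)) (b / (1 - c))"
    have nz: "(cmod z)^2 = (a^2 + b^2) / (1 - c)^2" by (simp add: z_def cmod_power2 power_divide add_divide_distrib)
    also have "... = (1 - c^2) / (1 - c)^2" using abc by (simp add: algebra_simps)
    also have "... = ((1 + c) * (1 - c)) / ((1 - c) * (1 - c))" by (simp add: algebra_simps power2_eq_square)
    also have "... = (1 + c) / (1 - c)" using c1 by simp
    finally have nz: "(cmod z)^2 = (1 + c) / (1 - c)" .
    have n1: "(cmod z)^2 + 1 = 2 / (1 - c)" using c1 unfolding nz by (simp add: field_simps)
    have e3: "(cmod z)^2 - 1 = 2 * c / (1 - c)" unfolding nz using c1 by (simp add: field_simps)
    have "st (Some z) = (a, b, c)" unfolding st_Some n1 e3 using c1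
      by (simp add: z_def field_simps)
    then show ?thesis using False s by (simp add: ist_def z_def)
  qed
qed

lemma range_st: "range st = SS"
  using st_in_SS st_ist by (metis image_subset_iff image_eqI subsetI subset_antisym UNIV_I)

lemma dist_st_N: "dist (st (Some z)) (st None) = 2 / sqrt ((cmod z)^2 + 1)"
proof -
  define r where "r = (cmod z)^2"
  have r: "r = (Re z)^2 + (Im z)^2" unfolding r_def by (simp add: cmod_power2)
  have r0: "r + 1 > 0" unfolding r_def by (smt (verit) zero_le_power2)
  have "(dist (st (Some z)) (st None))^2 = (2 * Re z / (r + 1))^2 + (2 * Im z / (r + 1))^2 + ((r - 1) / (r + 1) - 1)^2"
    by (simp add: st_Some st_None dist_norm norm_Pair r_def power_divide)
  also have "... = 4 * r / (r + 1)^2 + ((r - 1) / (r + 1) - 1)^2" using sq_lemma[OF r] by simp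
  also have "(r - 1) / (r + 1) - 1 = - 2 / (r + 1)" using r0 by (simp add: field_simps)
  also have "4 * r / (r + 1)^2 + (- 2 / (r + 1))^2 = (4 * (r + 1)) / ((r + 1) * (r + 1))"
    by (simp add: power_divide add_divide_distrib algebra_simps power2_eq_square)
  also have "... = 4 / (r + 1)"
  proof -
    have "r + 1 \<noteq> 0" using r0 by simp
    then show ?thesis by (metis mult.commute mult_divide_mult_cancel_left_if times_divide_eq_right)
  qed
  finally have "(dist (st (Some z)) (st None))^2 = 4 / (r + 1)" .
  then have "dist (st (Some z)) (st None) = sqrt (4 / (r + 1))" by (simp add: real_sqrt_unique)
  also have "... = 2 / sqrt (r + 1)" by (simp add: real_sqrt_divide)
  finally show ?thesis by (simp add: r_def)
qed

definition ext :: "(complex \<Rightarrow> complex) \<Rightarrow> complex option \<Rightarrow> complex option" where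
  "ext h w = (case w of None \<Rightarrow> None | Some z \<Rightarrow> Some (h z))"

definition Phi :: "(complex \<Rightarrow> complex) \<Rightarrow> real \<times> real \<times> real \<Rightarrow> real \<times> real \<times> real" where
  "Phi h s = st (ext h (ist s))"

lemma sq1_ne0 [simp]: "(cmod z)^2 + 1 \<noteq> 0"
  by (smt (verit) zero_le_power2)

lemma cont_stS: "continuous_on UNIV (\<lambda>z. st (Some z))"
  unfolding st_Some by (intro continuous_intros) auto

definition proj :: "real \<times> real \<times> real \<Rightarrow> complex" where
  "proj s = of_real (fst s / (1 - snd (snd s))) + \<i> * of_real (fst (snd s) / (1 - snd (snd s)))"

lemma ist_proj: "snd (snd s) \<noteq> 1 \<Longrightarrow> ist s = Some (proj s)"
  by (simp add: ist_def proj_def Complex_eq)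

lemma cont_proj: "continuous_on {s. snd (snd s) \<noteq> 1} proj"
  unfolding proj_def by (intro continuous_intros) auto

lemma N_eq: "st None = (0,0,1)" by (rule st_None)

lemma SS_not_N: "s \<in> SS \<Longrightarrow> s \<noteq> (0,0,1) \<Longrightarrow> snd (snd s) \<noteq> 1"
  by (metis ist_def st_None st_ist)

lemma Phi_cont:
  assumes ch: "continuous_on UNIV h" and ph: "\<And>B. \<exists>R. \<forall>z. R \<le> cmod z \<longrightarrow> B \<le> cmod (h z)"
  shows "continuous_on SS (Phi h)"
proof -
  define N where "N = (0::real,0::real,1::real)"
  have c1: "continuous_on (SS - {N}) (Phi h)"
  proof -
    have "continuous_on (SS - {N}) ((\<lambda>z. st (Some z)) \<circ> h \<circ> proj)"
      apply (intro continuous_on_compose)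
        apply (rule continuous_on_subset[OF cont_proj]) using SS_not_N apply (force simp: N_def)
       apply (rule continuous_on_subset[OF ch], simp)
      apply (rule continuous_on_subset[OF cont_stS], simp)
      done
    moreover have "Phi h s = ((\<lambda>z. st (Some z)) \<circ> h \<circ> proj) s" if "s \<in> SS - {N}" for s
      using that SS_not_N[of s] by (simp add: Phi_def ist_proj ext_def N_def)
    ultimately show ?thesis by (metis (no_types, lifting) continuous_on_eq)
  qed
  have cN: "continuous (at N within SS) (Phi h)"
  proof (unfold continuous_within_eps_delta, intro allI impI)
    fix e :: real assume e: "e > 0"
    obtain R where R: "\<forall>z. R \<le> cmod z \<longrightarrow> 2 / e \<le> cmod (h z)" using ph by blast
    define R' where "R' = max R 0"
    define d where "d = 2 / sqrt (R'^2 + 1)"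
    have d0: "d > 0" unfolding d_def by (simp add: add_nonneg_pos)
    have PN: "Phi h N = N" by (simp add: Phi_def N_def ist_def ext_def st_None)
    have "\<forall>x'\<in>SS. dist x' N < d \<longrightarrow> dist (Phi h x') (Phi h N) < e"
    proof (intro ballI impI)
      fix s assume s: "s \<in> SS" "dist s N < d"
      show "dist (Phi h s) (Phi h N) < e"
      proof (cases "s = N")
        case True then show ?thesis using e by simp
      next
        case False
        define z where "z = proj s"
        have iz: "ist s = Some z" using SS_not_N[OF s(1)] False by (simp add: z_def ist_proj N_def)
        have sz: "s = st (Some z)" using st_ist[OF s(1)] iz by simp
        have "2 / sqrt ((cmod z)^2 + 1) < 2 / sqrt (R'^2 + 1)" using s(2) sz dist_st_N[of z] by (simp add: N_def st_None d_def)
        then have "sqrt (R'^2 + 1) < sqrt ((cmod z)^2 + 1)"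
          by (smt (verit, ccfv_SIG) divide_left_mono real_sqrt_gt_zero zero_le_power2 mult_pos_pos)
        then have "R'^2 < (cmod z)^2" by simp
        then have "R' < cmod z" using R'_def by (smt (verit) power_mono norm_ge_zero)
        then have hz: "2 / e \<le> cmod (h z)" using R R'_def by auto
        have "Phi h s = st (Some (h z))" by (simp add: Phi_def iz ext_def)
        then have "dist (Phi h s) (Phi h N) = 2 / sqrt ((cmod (h z))^2 + 1)" using PN dist_st_N by (simp add: N_def st_None)
        also have "... < 2 / (2 / e)"
        proof -
          have "2 / e < sqrt ((cmod (h z))^2 + 1)"
          proof -
            have "cmod (h z) < sqrt ((cmod (h z))^2 + 1)" by (simp add: real_less_rsqrt)
            then show ?thesis using hz by linarith
          qed
          moreover have "0 < 2 / e" using e by simp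
          moreover have "0 < sqrt ((cmod (h z))^2 + 1)" by (simp add: add_nonneg_pos)
          ultimately show ?thesis using e by (intro divide_strict_left_mono) (auto simp del: times_divide_eq_right)
        qed
        also have "... = e" by simp
        finally show ?thesis .
      qed
    qed
    then show "\<exists>d>0. \<forall>x'\<in>SS. dist x' N < d \<longrightarrow> dist (Phi h x') (Phi h N) < e" using d0 by blast
  qed
  show ?thesis
  proof (unfold continuous_on_eq_continuous_within, intro ballI)
    fix s assume s: "s \<in> SS"
    show "continuous (at s within SS) (Phi h)"
    proof (cases "s = N")
      case True then show ?thesis using cN by simp
    next
      case False
      have "continuous (at s within SS - {N}) (Phi h)" using c1 s False continuous_on_eq_continuous_within by blast
      moreover have "at s within SS - {N} = at s within SS"
        by (rule at_within_nhd[of _ "- {N}"]) (use False in auto)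
      ultimately show ?thesis by simp
    qed
  qed
qed

definition Mo :: "complex \<Rightarrow> real \<times> real \<times> real \<Rightarrow> real \<times> real \<times> real" where
  "Mo w s = (Re (w * (of_real (fst s) - \<i> * of_real (fst (snd s)))),
             Im (w * (of_real (fst s) - \<i> * of_real (fst (snd s)))), - snd (snd s))"

definition J :: "complex \<Rightarrow> complex option \<Rightarrow> complex option" where
  "J w v = (case v of None \<Rightarrow> Some 0 | Some z \<Rightarrow> if z = 0 then None else Some (w / z))"

lemma cont_Mo: "continuous_on UNIV (Mo w)"
  unfolding Mo_def by (intro continuous_intros)

lemma stJ:
  assumes w: "cmod w = 1"
  shows "st (J w v) = Mo w (st v)"
proof (cases v)
  case None then show ?thesis by (simp add: J_def Mo_def st_Some st_None)
next
  case (Some z)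
  show ?thesis
  proof (cases "z = 0")
    case True then show ?thesis using Some by (simp add: J_def Mo_def st_Some st_None)
  next
    case False
    define r where "r = (cmod z)^2"
    have r0: "r > 0" using False by (simp add: r_def)
    have nwz: "(cmod (w / z))^2 = 1 / r" using w by (simp add: r_def norm_divide power_divide)
    have wz: "w / z = (w * cnj z) / of_real r" by (simp add: r_def complex_div_cnj[of w z])
    have cz: "of_real (2 * Re z / (r + 1)) - \<i> * of_real (2 * Im z / (r + 1)) = of_real (2 / (r + 1)) * cnj z"
      by (simp add: complex_eq_iff)
    have gen: "2 * (X / r) / (1 / r + 1) = 2 / (r + 1) * X" for X
      using r0 by (simp add: field_simps)
    have e1: "2 * Re (w / z) / (1 / r + 1) = 2 / (r + 1) * Re (w * cnj z)"
      unfolding wz Re_divide_of_real by (rule gen)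
    have e2: "2 * Im (w / z) / (1 / r + 1) = 2 / (r + 1) * Im (w * cnj z)"
      unfolding wz Im_divide_of_real by (rule gen)
    have e3: "(1 / r - 1) / (1 / r + 1) = - ((r - 1) / (r + 1))"
    proof -
      have a: "1 / r - 1 = (1 - r) / r" "1 / r + 1 = (1 + r) / r" using r0 by (simp_all add: field_simps)
      have "((1 - r) / r) / ((1 + r) / r) = (1 - r) / (1 + r)" using r0 by simp
      also have "... = - ((r - 1) / (r + 1))" by (simp add: minus_divide_left add.commute)
      finally show ?thesis unfolding a .
    qed
    have lhs: "st (J w v) = (2 / (r + 1) * Re (w * cnj z), 2 / (r + 1) * Im (w * cnj z), - ((r - 1) / (r + 1)))"
      using False Some by (simp add: J_def st_Some nwz e1 e2 e3)
    have rhs: "Mo w (st v) = (2 / (r + 1) * Re (w * cnj z), 2 / (r + 1) * Im (w * cnj z), - ((r - 1) / (r + 1)))"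
      unfolding Some st_Some Mo_def r_def[symmetric] by (simp add: cz mult.left_commute[of w]) (simp add: add_divide_distrib diff_divide_distrib algebra_simps)
    show ?thesis using lhs rhs by simp
  qed
qed

lemma Mo_SS: "cmod w = 1 \<Longrightarrow> s \<in> SS \<Longrightarrow> Mo w s \<in> SS"
  by (metis st_ist stJ st_in_SS)

lemma Phi_st: "Phi h (st v) = st (ext h v)" by (simp add: Phi_def)

lemma omega_pow:
  assumes "2 \<le> d0"
  shows "cis (2 * pi * real k / real (d0 - 1)) ^ (d0 - 1) = 1"
proof -
  have "real (d0 - 1) \<noteq> 0" using assms by simp
  then have e: "real (d0 - 1) * (2 * pi * real k / real (d0 - 1)) = 2 * pi * real k" by simp
  have "cis (2 * pi * real k / real (d0 - 1)) ^ (d0 - 1) = cis (real (d0 - 1) * (2 * pi * real k / real (d0 - 1)))"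
    by (rule Complex.DeMoivre)
  then have "cis (2 * pi * real k / real (d0 - 1)) ^ (d0 - 1) = cis (2 * pi * real k)" by (simp only: e)
  also have "... = 1"
  proof -
    have "2 * pi * real k = 2 * real k * pi" by simp
    then show ?thesis by (simp only:) (simp add: complex_eq_iff)
  qed
  finally show ?thesis .
qed

lemma glue_outer: "1 \<le> cmod z \<Longrightarrow> glue f g d0 k (Some z) = ext f (Some z)"
  by (simp add: glue_def ext_def)

lemma glue_None: "glue f g d0 k None = ext f None"
  by (simp add: glue_def ext_def)

lemma glue_inner:
  assumes z: "cmod z \<le> 1" and d0: "2 \<le> d0"
    and f1: "\<And>z. cmod z = 1 \<Longrightarrow> f z = z ^ d0" and g1: "\<And>z. cmod z = 1 \<Longrightarrow> g z = z ^ d0"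
  shows "glue f g d0 k (Some z) = J (cis (2 * pi * real k / real (d0 - 1))) (ext g (J (cis (2 * pi * real k / real (d0 - 1))) (Some z)))"
proof -
  define w where "w = cis (2 * pi * real k / real (d0 - 1))"
  have io: "iota d0 k \<zeta> = w / \<zeta>" for \<zeta> by (simp add: iota_def w_def)
  have w1: "cmod w = 1" by (simp add: w_def)
  have w0: "w \<noteq> 0" using w1 by auto
  have "glue f g d0 k (Some z) = J w (ext g (J w (Some z)))"
  proof (cases "z = 0")
    case True then show ?thesis by (simp add: glue_def J_def ext_def)
  next
    case False
    show ?thesis
    proof (cases "cmod z = 1")
      case True
      have "cmod (w / z) = 1" using True w1 by (simp add: norm_divide)
      then have gw: "g (w / z) = (w / z) ^ d0" using g1 by blast
      have wd: "w ^ d0 = w"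
      proof -
        have "w ^ d0 = w ^ (d0 - 1) * w" using d0 by (metis Suc_diff_1 le_trans one_le_numeral power_Suc2 less_le_trans zero_less_one le_numeral_extra(4) not_one_le_zero linorder_not_le)
        then show ?thesis using omega_pow[OF d0, of k] by (simp add: w_def)
      qed
      have "g (w / z) \<noteq> 0" using gw w0 False by simp
      moreover have "w / g (w / z) = z ^ d0" using gw wd w0 False by (simp add: power_divide)
      ultimately show ?thesis using True f1[OF True] False
        by (simp add: glue_def J_def ext_def io)
    next
      case False
      then have "cmod z < 1" using z by simp
      then show ?thesis using \<open>z \<noteq> 0\<close> by (simp add: glue_def J_def ext_def io)
    qed
  qed
  then show ?thesis by (simp add: w_def)
qed

lemma G_cont:
  assumes cf: "continuous_on UNIV f" and pf: "\<And>B. \<exists>R. \<forall>z. R \<le> cmod z \<longrightarrow> B \<le> cmod (f z)"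
    and cg: "continuous_on UNIV g" and pg: "\<And>B. \<exists>R. \<forall>z. R \<le> cmod z \<longrightarrow> B \<le> cmod (g z)"
    and d0: "2 \<le> d0"
    and f1: "\<And>z. cmod z = 1 \<Longrightarrow> f z = z ^ d0" and g1: "\<And>z. cmod z = 1 \<Longrightarrow> g z = z ^ d0"
  shows "continuous_on SS (\<lambda>s. st (glue f g d0 k (ist s)))"
proof -
  define w where "w = cis (2 * pi * real k / real (d0 - 1))"
  have w1: "cmod w = 1" by (simp add: w_def)
  define SSo where "SSo = SS \<inter> {s. 0 \<le> snd (snd s)}"
  define SSi where "SSi = SS \<inter> {s. snd (snd s) \<le> 0}"
  have SSu: "SS = SSo \<union> SSi" by (auto simp: SSo_def SSi_def)
  have clo: "closed SSo" unfolding SSo_def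
    by (intro closed_Int closed_sphere closed_Collect_le continuous_intros)
  have cli: "closed SSi" unfolding SSi_def
    by (intro closed_Int closed_sphere closed_Collect_le continuous_intros)
  have co: "continuous_on SSo (\<lambda>s. st (glue f g d0 k (ist s)))"
  proof (rule continuous_on_eq)
    show "continuous_on SSo (Phi f)" using Phi_cont[OF cf pf] by (rule continuous_on_subset) (auto simp: SSo_def)
    fix s assume s: "s \<in> SSo"
    show "Phi f s = st (glue f g d0 k (ist s))"
    proof (cases "ist s")
      case None then show ?thesis by (simp add: Phi_def glue_None)
    next
      case (Some z)
      have "s = st (Some z)" using st_ist[of s] s Some by (simp add: SSo_def)
      then have "0 \<le> ((cmod z)^2 - 1) / ((cmod z)^2 + 1)" using s by (simp add: SSo_def st_Some)
      then have "1 \<le> (cmod z)^2" by (smt (verit) divide_neg_pos zero_le_power2)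
      then have "1 \<le> cmod z" using power2_le_imp_le[of 1 "cmod z"] by simp
      then show ?thesis using Some by (simp add: Phi_def glue_outer)
    qed
  qed
  have ci: "continuous_on SSi (\<lambda>s. st (glue f g d0 k (ist s)))"
  proof (rule continuous_on_eq)
    have m1: "Mo w ` SSi \<subseteq> SS" using Mo_SS[OF w1] by (auto simp: SSi_def)
    have "continuous_on SSi (Phi g \<circ> Mo w)"
      by (rule continuous_on_compose[OF continuous_on_subset[OF cont_Mo] continuous_on_subset[OF Phi_cont[OF cg pg] m1]]) simp
    moreover have "(Phi g \<circ> Mo w) ` SSi \<subseteq> UNIV" by simp
    ultimately show "continuous_on SSi (Mo w \<circ> Phi g \<circ> Mo w)"
      by (metis comp_assoc continuous_on_compose continuous_on_subset[OF cont_Mo] subset_UNIV)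
    fix s assume s: "s \<in> SSi"
    have sS: "s \<in> SS" using s by (simp add: SSi_def)
    show "(Mo w \<circ> Phi g \<circ> Mo w) s = st (glue f g d0 k (ist s))"
    proof (cases "ist s")
      case None
      then have "s = st None" using st_ist[OF sS] by simp
      then show ?thesis using s by (simp add: SSi_def st_None)
    next
      case (Some z)
      have sz: "s = st (Some z)" using st_ist[OF sS] Some by simp
      then have "((cmod z)^2 - 1) / ((cmod z)^2 + 1) \<le> 0" using s by (simp add: SSi_def st_Some)
      then have "(cmod z)^2 \<le> 1" by (smt (verit) divide_pos_pos zero_le_power2)
      then have z1: "cmod z \<le> 1" using power2_le_imp_le[of "cmod z" 1] by simp
      have "st (glue f g d0 k (ist s)) = st (J w (ext g (J w (Some z))))"
        using glue_inner[OF z1 d0 f1 g1, of k] Some by (simp add: w_def)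
      also have "... = Mo w (Phi g (st (J w (Some z))))"
      proof -
        have a: "st (J w (ext g (J w (Some z)))) = Mo w (st (ext g (J w (Some z))))" by (rule stJ[OF w1])
        have b: "Phi g (st (J w (Some z))) = st (ext g (J w (Some z)))" by (rule Phi_st)
        show ?thesis by (simp only: a b)
      qed
      also have "... = Mo w (Phi g (Mo w s))"
      proof -
        have "Mo w s = st (J w (Some z))" using stJ[OF w1, of "Some z"] sz by simp
        then show ?thesis by (simp only:)
      qed
      finally show ?thesis by simp
    qed
  qed
  show ?thesis unfolding SSu by (rule continuous_on_closed_Un[OF clo cli co ci])
qed

lemma homeo_proper:
  fixes \<phi> :: "complex \<Rightarrow> complex"
  assumes h: "homeomorphism UNIV UNIV \<phi> \<psi>"
  shows "\<exists>R. \<forall>z. R \<le> cmod z \<longrightarrow> B \<le> cmod (\<phi> z)"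
proof -
  have "continuous_on UNIV \<psi>" using h by (simp add: homeomorphism_def)
  then have "compact (\<psi> ` cball 0 B)" by (rule compact_continuous_image[OF continuous_on_subset]) auto
  then obtain M where M: "\<forall>w\<in>\<psi> ` cball 0 B. norm w \<le> M" using compact_imp_bounded bounded_iff by metis
  show ?thesis
  proof (intro exI allI impI)
    fix z :: complex assume z: "M + 1 \<le> cmod z"
    show "B \<le> cmod (\<phi> z)"
    proof (rule ccontr)
      assume "\<not> B \<le> cmod (\<phi> z)"
      then have "\<phi> z \<in> cball 0 B" by simp
      moreover have "\<psi> (\<phi> z) = z" using h by (simp add: homeomorphism_def)
      ultimately have "cmod z \<le> M" using M by force
      then show False using z by simp
    qed
  qed
qed

lemma poly_proper:
  fixes p :: "complex poly"
  assumes "degree p \<ge> 1"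
  shows "\<exists>R. \<forall>z. R \<le> cmod z \<longrightarrow> B \<le> cmod (poly p z)"
proof -
  obtain a p' where p: "p = pCons a p'" by (cases p) auto
  have "p' \<noteq> 0" using assms p by auto
  then show ?thesis using poly_infinity[of p' B a] p by auto
qed

lemma npp_props:
  assumes "normalized_pcf_poly d0 f"
  shows "continuous_on UNIV f" "\<And>B. \<exists>R. \<forall>z. R \<le> cmod z \<longrightarrow> B \<le> cmod (f z)"
    "\<And>z. cmod z = 1 \<Longrightarrow> f z = z ^ d0"
proof -
  obtain p :: "complex poly" and \<phi> \<psi> :: "complex \<Rightarrow> complex" where dp: "degree p \<ge> 2" and h: "homeomorphism UNIV UNIV \<phi> \<psi>"
    and conj: "\<forall>z. \<phi> (f z) = poly p (\<phi> z)" and fb: "\<forall>z \<in> ball 0 1. f z = z ^ d0"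
    using assms unfolding normalized_pcf_poly_def Let_def by (elim exE conjE) blast
  have fe: "f z = \<psi> (poly p (\<phi> z))" for z
    using h conj by (metis homeomorphism_def UNIV_I)
  have c\<phi>: "continuous_on UNIV \<phi>" and c\<psi>: "continuous_on UNIV \<psi>" using h by (auto simp: homeomorphism_def)
  have h2: "homeomorphism UNIV UNIV \<psi> \<phi>" using h by (simp add: homeomorphism_symD)
  show cf: "continuous_on UNIV f"
  proof -
    have "continuous_on UNIV (\<lambda>z. poly p (\<phi> z))" by (intro continuous_intros c\<phi>)
    then have "continuous_on UNIV (\<psi> \<circ> (\<lambda>z. poly p (\<phi> z)))"
      by (rule continuous_on_compose) (rule continuous_on_subset[OF c\<psi>], simp)
    then show ?thesis by (simp add: o_def fe[abs_def])
  qed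
  show "\<exists>R. \<forall>z. R \<le> cmod z \<longrightarrow> B \<le> cmod (f z)" for B
  proof -
    obtain R1 where R1: "\<forall>w. R1 \<le> cmod w \<longrightarrow> B \<le> cmod (\<psi> w)" using homeo_proper[OF h2] by blast
    obtain R2 where R2: "\<forall>w. R2 \<le> cmod w \<longrightarrow> R1 \<le> cmod (poly p w)" using poly_proper[of p R1] dp by auto
    obtain R3 where R3: "\<forall>w. R3 \<le> cmod w \<longrightarrow> R2 \<le> cmod (\<phi> w)" using homeo_proper[OF h] by blast
    show ?thesis using R1 R2 R3 fe by metis
  qed
  show "f z = z ^ d0" if z: "cmod z = 1" for z
  proof -
    have "closed {z. f z = z ^ d0}"
      by (rule closed_Collect_eq) (auto intro!: continuous_intros cf)
    moreover have "ball 0 1 \<subseteq> {z. f z = z ^ d0}" using fb by auto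
    ultimately have "closure (ball (0::complex) 1) \<subseteq> {z. f z = z ^ d0}" by (rule closure_minimal[rotated])
    then have "cball (0::complex) 1 \<subseteq> {z. f z = z ^ d0}" by simp
    moreover have "z \<in> cball 0 1" using z by simp
    ultimately show ?thesis by blast
  qed
qed

lemma open_map_sphere:
  fixes G :: "real \<times> real \<times> real \<Rightarrow> real \<times> real \<times> real"
  assumes cG: "continuous_on SS G" and GS: "G ` SS \<subseteq> SS"
    and V: "openin (top_of_set SS) V" and inj: "inj_on G V"
  shows "openin (top_of_set SS) (G ` V)"
proof (rule openin_subopen[THEN iffD2], intro ballI)
  fix y assume "y \<in> G ` V"
  then obtain a where a: "a \<in> V" "y = G a" by blast
  have VS: "V \<subseteq> SS" using V openin_imp_subset by blast
  have yS: "y \<in> SS" using a VS GS by blast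
  define n where "n = - y"
  have nS: "n \<in> SS" using yS by (simp add: n_def)
  have ny: "y \<noteq> n"
  proof
    assume "y = n"
    then have "y + y = 0" by (simp add: n_def) (metis add.right_inverse)
    then have "(2::real) *\<^sub>R y = 0" by (simp add: scaleR_2)
    then have "y = 0" by simp
    then show False using yS by simp
  qed
  define V' where "V' = V \<inter> (SS \<inter> G -` (- {n}))"
  have oV': "openin (top_of_set SS) V'" unfolding V'_def
    by (rule openin_Int[OF V continuous_openin_preimage_gen[OF cG]]) auto
  define T0 where "T0 = {x::real\<times>real\<times>real. (0,0,1) \<bullet> x = 0}"
  have "(SS - {n}) homeomorphic T0" unfolding T0_def
    by (rule homeomorphic_punctured_sphere_hyperplane) (use nS in \<open>auto simp: zero_prod_def\<close>)
  then obtain h k where hk: "homeomorphism (SS - {n}) T0 h k" unfolding homeomorphic_def by blast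
  have affT0: "affine T0" unfolding T0_def by (rule affine_hyperplane)
  have dT0: "aff_dim T0 < int DIM(real\<times>real\<times>real)" unfolding T0_def
  proof -
    have ne: "(0::real, 0::real, 1::real) \<noteq> 0" by (simp add: zero_prod_def)
    have "aff_dim {x::real\<times>real\<times>real. (0,0,1) \<bullet> x = 0} = int DIM(real\<times>real\<times>real) - 1"
      using aff_dim_hyperplane[OF ne, of 0] by simp
    then show "aff_dim {x::real\<times>real\<times>real. (0,0,1) \<bullet> x = 0} < int DIM(real\<times>real\<times>real)" by linarith
  qed
  have V'sub: "G ` V' \<subseteq> SS - {n}" using GS VS by (auto simp: V'_def)
  have kh: "\<And>x. x \<in> SS - {n} \<Longrightarrow> k (h x) = x" using hk by (simp add: homeomorphism_def)
  have hT: "h ` (SS - {n}) = T0" using hk by (simp add: homeomorphism_def)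
  have ch: "continuous_on (SS - {n}) h" using hk by (simp add: homeomorphism_def)
  have cG': "continuous_on V' G" using cG by (rule continuous_on_subset) (auto simp: V'_def)
  have "openin (top_of_set T0) ((h \<circ> G) ` V')"
  proof (rule invariance_of_domain_sphere_affine_set[OF _ _ _ _ affT0 dT0 oV'])
    show "continuous_on V' (h \<circ> G)" by (rule continuous_on_compose[OF cG' continuous_on_subset[OF ch V'sub]])
    show "inj_on (h \<circ> G) V'"
    proof (rule comp_inj_on)
      show "inj_on G V'" using inj by (rule inj_on_subset) (auto simp: V'_def)
      show "inj_on h (G ` V')" by (rule inj_on_inverseI[of _ k]) (use kh V'sub in blast)
    qed
    show "h \<circ> G \<in> V' \<rightarrow> T0"
    proof
      fix x assume "x \<in> V'"
      then have "G x \<in> SS - {n}" using V'sub by blast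
      then show "(h \<circ> G) x \<in> T0" using hT by auto
    qed
  qed simp
  then have "openin (top_of_set (SS - {n})) (k ` ((h \<circ> G) ` V'))"
    by (rule homeomorphism_imp_open_map[OF homeomorphism_symD[OF hk]])
  moreover have "k ` ((h \<circ> G) ` V') = G ` V'"
  proof -
    have "\<And>x. x \<in> SS - {n} \<Longrightarrow> k (h x) = x" using hk by (simp add: homeomorphism_def)
    then have "\<And>x. x \<in> V' \<Longrightarrow> k (h (G x)) = G x" using V'sub by blast
    then have "(k \<circ> (h \<circ> G)) ` V' = G ` V'" by (intro image_cong) auto
    then show ?thesis by (simp add: image_comp)
  qed
  ultimately have "openin (top_of_set (SS - {n})) (G ` V')" by simp
  moreover have "openin (top_of_set SS) (SS - {n})" by (simp add: openin_delete)
  ultimately have oGV': "openin (top_of_set SS) (G ` V')" using openin_trans by blast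
  have "y \<in> G ` V'" using a ny yS VS by (auto simp: V'_def)
  moreover have "G ` V' \<subseteq> G ` V" by (auto simp: V'_def)
  ultimately show "\<exists>T. openin (top_of_set SS) T \<and> y \<in> T \<and> T \<subseteq> G ` V" using oGV' by blast
qed

lemma homotopic_loops_clopen:
  assumes hom: "homotopic_loops B p q" and o: "openin (top_of_set B) T'" and c: "closedin (top_of_set B) T'"
    and y: "y \<in> path_image q" "y \<in> T'"
  shows "homotopic_loops T' p q"
proof -
  obtain h where h: "continuous_on ({0..1::real}\<times>{0..1::real}) h" "h \<in> ({0..1}\<times>{0..1}) \<rightarrow> B"
      "\<forall>x\<in>{0..1}. h(0,x) = p x" "\<forall>x\<in>{0..1}. h(1,x) = q x"
      "\<forall>t\<in>{0..1}. pathfinish(h \<circ> Pair t) = pathstart(h \<circ> Pair t)"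
    using hom[unfolded homotopic_loops] by blast
  define R where "R = h ` ({0..1}\<times>{0..1})"
  have conR: "connected R" unfolding R_def
    by (rule connected_continuous_image[OF h(1)]) (intro convex_connected convex_Times convex_real_interval)
  have RB: "R \<subseteq> B" using h(2) by (auto simp: R_def)
  have "openin (top_of_set R) (R \<inter> T')"
  proof -
    obtain Ob where "open Ob" "T' = B \<inter> Ob" using o openin_open by metis
    then have "R \<inter> T' = R \<inter> Ob" using RB by blast
    then show ?thesis using \<open>open Ob\<close> openin_open by metis
  qed
  moreover have "closedin (top_of_set R) (R \<inter> T')"
  proof -
    obtain Ob where "closed Ob" "T' = B \<inter> Ob" using c closedin_closed by metis
    then have "R \<inter> T' = R \<inter> Ob" using RB by blast
    then show ?thesis using \<open>closed Ob\<close> closedin_closed by metis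
  qed
  moreover have "y \<in> R \<inter> T'"
  proof -
    obtain t where t: "t \<in> {0..1}" "y = q t" using y(1) by (auto simp: path_image_def)
    then have "y = h (1, t)" using h(4) by simp
    then show ?thesis using t y(2) by (auto simp: R_def)
  qed
  ultimately have "R \<inter> T' = R" using conR unfolding connected_clopen by blast
  then have "h \<in> ({0..1}\<times>{0..1}) \<rightarrow> T'" by (auto simp: R_def)
  then show ?thesis unfolding homotopic_loops using h by blast
qed

lemma Nint_mono_inj:
  assumes inj: "inj_on F L" and sub: "F ` \<gamma>' \<subseteq> \<gamma>"
  shows "Nint \<gamma>' L \<le> Nint \<gamma> (F ` L)"
proof (cases "finite (\<gamma> \<inter> F ` L)")
  case False then show ?thesis by (simp add: Nint_def)
next
  case True
  have im: "F ` (\<gamma>' \<inter> L) \<subseteq> \<gamma> \<inter> F ` L" using sub by auto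
  have inj2: "inj_on F (\<gamma>' \<inter> L)" using inj by (rule inj_on_subset) auto
  have fin: "finite (\<gamma>' \<inter> L)" using finite_imageD[OF finite_subset[OF im True] inj2] .
  have "card (\<gamma>' \<inter> L) \<le> card (\<gamma> \<inter> F ` L)" by (rule card_inj_on_le[OF inj2 im True])
  then show ?thesis using fin True by (simp add: Nint_def)
qed

theorem lemma4p1:
  fixes f g :: "complex \<Rightarrow> complex" and d0 k :: nat
    and F0 :: "complex option set set" and C C' :: "complex option set"
  assumes "2 \<le> d0" and "1 \<le> k" and "k \<le> d0 - 1"
    and "normalized_pcf_poly d0 f" and "normalized_pcf_poly d0 g"
    and "sep_family (glue f g d0 k) F0"
    and "non_peripheral (postcrit (glue f g d0 k)) C"
    and "preimage_component (glue f g d0 k) C C'"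
  shows "complexity (postcrit (glue f g d0 k)) F0 C' \<le> complexity (postcrit (glue f g d0 k)) F0 C"
proof -
  note d0 = assms(1) and npf = assms(4) and npg = assms(5) and sep = assms(6)
    and np = assms(7) and pc = assms(8)
  define F where "F = glue f g d0 k"
  define P where "P = postcrit F"
  define Gs where "Gs = (\<lambda>s. st (F (ist s)))"
  define B where "B = SS - st ` P"
  define A where "A = SS \<inter> Gs -` B"
  have cGs: "continuous_on SS Gs" unfolding Gs_def F_def
    by (rule G_cont[OF npp_props(1)[OF npf] npp_props(2)[OF npf] npp_props(1)[OF npg] npp_props(2)[OF npg] d0
          npp_props(3)[OF npf] npp_props(3)[OF npg]])
  have GsSS: "Gs ` SS \<subseteq> SS" using st_in_SS by (auto simp: Gs_def)
  have Gst: "Gs (st w) = st (F w)" for w by (simp add: Gs_def)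
  have FP: "F w \<in> P" if wP: "w \<in> P" for w
  proof -
    obtain n c where "w = (F ^^ n) c" "n \<ge> 1" "c \<in> critical_points F"
      using wP unfolding P_def postcrit_def by blast
    then have "F w = (F ^^ Suc n) c" "Suc n \<ge> 1" by auto
    then show ?thesis using \<open>c \<in> critical_points F\<close> unfolding P_def postcrit_def by blast
  qed
  have AB: "A \<subseteq> B"
  proof
    fix s assume s: "s \<in> A"
    then have sS: "s \<in> SS" and GB: "Gs s \<in> B" by (auto simp: A_def)
    show "s \<in> B"
    proof (rule ccontr)
      assume "s \<notin> B"
      then obtain w where "w \<in> P" "s = st w" using sS by (auto simp: B_def)
      then have "Gs s \<in> st ` P" using FP Gst by auto
      then show False using GB by (auto simp: B_def)
    qed
  qed
  have ASS: "A \<subseteq> SS" by (auto simp: A_def)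
  have inj: "\<exists>e>0. inj_on Gs (SS \<inter> ball a e)" if a: "a \<in> A" for a
  proof -
    define c where "c = ist a"
    have ac: "a = st c" using a st_ist by (auto simp: A_def c_def)
    have "c \<notin> critical_points F"
    proof
      assume "c \<in> critical_points F"
      then have "(F ^^ 1) c \<in> P" unfolding P_def postcrit_def by blast
      then have "Gs a \<in> st ` P" using Gst ac by simp
      then show False using a by (auto simp: A_def B_def)
    qed
    then obtain e where e: "e > 0" "inj_on F {w. dist (st w) (st c) < e}"
      unfolding critical_points_def by blast
    have "inj_on Gs (SS \<inter> ball a e)"
    proof (rule inj_onI)
      fix s1 s2 assume s1: "s1 \<in> SS \<inter> ball a e" and s2: "s2 \<in> SS \<inter> ball a e" and eq: "Gs s1 = Gs s2"
      have "F (ist s1) = F (ist s2)" using eq by (simp add: Gs_def)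
      moreover have "ist s1 \<in> {w. dist (st w) (st c) < e}" using s1 st_ist ac by (auto simp: dist_commute)
      moreover have "ist s2 \<in> {w. dist (st w) (st c) < e}" using s2 st_ist ac by (auto simp: dist_commute)
      ultimately have "ist s1 = ist s2" using e(2) by (auto dest: inj_onD)
      moreover have "st (ist s1) = s1" using s1 by (intro st_ist) blast
      moreover have "st (ist s2) = s2" using s2 by (intro st_ist) blast
      ultimately show "s1 = s2" by metis
    qed
    then show ?thesis using e(1) by blast
  qed
  have opn: "openin (top_of_set B) (Gs ` W)" if W: "openin (top_of_set A) W" for W
  proof (rule openin_subopen[THEN iffD2], intro ballI)
    fix y assume "y \<in> Gs ` W"
    then obtain a where a: "a \<in> W" "y = Gs a" by blast
    obtain Ob where Ob: "open Ob" "W = A \<inter> Ob" using W openin_open by metis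
    have aA: "a \<in> A" using a Ob by auto
    obtain e where e: "e > 0" "inj_on Gs (SS \<inter> ball a e)" using inj[OF aA] by blast
    define V where "V = SS \<inter> (ball a e \<inter> Ob)"
    have oV: "openin (top_of_set SS) V" unfolding V_def using Ob(1) by (intro openin_open_Int) auto
    have injV: "inj_on Gs V" using e(2) by (rule inj_on_subset) (auto simp: V_def)
    have "openin (top_of_set SS) (Gs ` V)" by (rule open_map_sphere[OF cGs GsSS oV injV])
    then obtain O3 where O3: "open O3" "Gs ` V = SS \<inter> O3" using openin_open by metis
    define X where "X = Gs ` V \<inter> B"
    have BS: "B \<subseteq> SS" by (auto simp: B_def)
    have "X = B \<inter> O3" using O3 BS by (auto simp: X_def)
    then have oX: "openin (top_of_set B) X" using O3(1) openin_open by metis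
    have aV: "a \<in> V" using aA e(1) Ob a(1) by (auto simp: V_def A_def)
    have yX: "y \<in> X" using aV aA a(2) by (auto simp: X_def A_def)
    have XW: "X \<subseteq> Gs ` W"
    proof
      fix z assume "z \<in> X"
      then obtain v where v: "v \<in> V" "z = Gs v" "Gs v \<in> B" by (auto simp: X_def)
      then have "v \<in> W" using Ob by (auto simp: V_def A_def)
      then show "z \<in> Gs ` W" using v by blast
    qed
    show "\<exists>T. openin (top_of_set B) T \<and> y \<in> T \<and> T \<subseteq> Gs ` W" using oX yX XW by blast
  qed
  have Adef: "A = SS \<inter> Gs -` B" by (simp add: A_def)
  note cfl = cov_from_local[OF compact_sphere cGs Adef inj opn]
  have cov: "covering_space A Gs (Gs ` A)" by (rule cfl(1))
  have finfib: "finite (A \<inter> Gs -` {y})" if "y \<in> Gs ` A" for y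
  proof -
    have "y \<in> B" using that by (auto simp: A_def)
    then have "finite (SS \<inter> Gs -` {y})" using cfl(2) by blast
    then show ?thesis by (rule finite_subset[rotated]) (auto simp: A_def)
  qed
  have oT: "openin (top_of_set B) (Gs ` A)" by (rule opn) simp
  have cT: "closedin (top_of_set B) (Gs ` A)"
  proof -
    have "compact (Gs ` SS)" by (rule compact_continuous_image[OF cGs compact_sphere])
    then have "closed (Gs ` SS)" by (rule compact_imp_closed)
    moreover have "Gs ` A = B \<inter> Gs ` SS"
    proof
      show "Gs ` A \<subseteq> B \<inter> Gs ` SS" unfolding A_def by blast
      show "B \<inter> Gs ` SS \<subseteq> Gs ` A"
      proof
        fix y assume "y \<in> B \<inter> Gs ` SS"
        then obtain s where "s \<in> SS" "y = Gs s" "Gs s \<in> B" by blast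
        then show "y \<in> Gs ` A" unfolding A_def by blast
      qed
    qed
    ultimately show ?thesis by (metis closedin_closed Int_commute)
  qed
  have stP: "st ` (UNIV - P) = B" unfolding B_def using range_st st_inj by (metis image_set_diff)
  obtain x0 where x0: "x0 \<in> F -` C" "st ` C' = connected_component_set (st ` (F -` C)) (st x0)"
    using pc by (auto simp: preimage_component_def F_def)
  have CP: "C \<inter> P = {}" using np by (simp add: non_peripheral_def P_def F_def)
  define x where "x = st x0"
  have GxC: "Gs x \<in> st ` C" using x0 by (simp add: x_def Gst)
  have CB: "st ` C \<subseteq> B" using CP st_in_SS by (auto simp: B_def)
  have xA: "x \<in> A" using GxC CB st_in_SS by (auto simp: A_def x_def)
  show ?thesis
    unfolding complexity_def P_def[symmetric] F_def[symmetric]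
  proof (rule INF_mono)
    fix \<gamma> assume "\<gamma> \<in> {\<gamma>. jordan_curve \<gamma> \<and> curve_homotopic P \<gamma> C}"
    then obtain p q where p: "simple_path p" "pathfinish p = pathstart p" "path_image p = st ` \<gamma>"
        and q: "simple_path q" "pathfinish q = pathstart q" "path_image q = st ` C"
        and hpq: "homotopic_loops (st ` (UNIV - P)) p q"
      by (auto simp: curve_homotopic_def)
    have hB: "homotopic_loops B p q" using hpq stP by simp
    have hT: "homotopic_loops (Gs ` A) p q"
      by (rule homotopic_loops_clopen[OF hB oT cT, of "Gs x"]) (use q(3) GxC xA in auto)
    have xq: "Gs x \<in> path_image q" using q(3) GxC by simp
    obtain p' q' where p': "simple_path p'" "pathfinish p' = pathstart p'" "Gs ` path_image p' \<subseteq> path_image p"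
        and q': "simple_path q'" "pathfinish q' = pathstart q'"
           "path_image q' = connected_component_set (A \<inter> Gs -` path_image q) x"
        and hA: "homotopic_loops A p' q'"
      using lift_main[OF cov finfib p(1) q(1) hT xA xq] by blast
    have Eeq: "A \<inter> Gs -` path_image q = st ` (F -` C)"
    proof
      show "A \<inter> Gs -` path_image q \<subseteq> st ` (F -` C)"
      proof
        fix s assume s: "s \<in> A \<inter> Gs -` path_image q"
        then have sS: "s \<in> SS" by (auto simp: A_def)
        have "st (F (ist s)) \<in> st ` C" using s q(3) by (simp add: Gs_def)
        then have "F (ist s) \<in> C" by auto
        then show "s \<in> st ` (F -` C)" using st_ist[OF sS] by (metis image_eqI vimageI)
      qed
      show "st ` (F -` C) \<subseteq> A \<inter> Gs -` path_image q"
        using CB st_in_SS q(3) by (auto simp: A_def Gst)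
    qed
    have pA: "path_image p' \<subseteq> A" using homotopic_loops_imp_subset[OF hA] by simp
    define \<gamma>' where "\<gamma>' = st -` path_image p'"
    have stg: "st ` \<gamma>' = path_image p'" using pA ASS range_st by (auto simp: \<gamma>'_def)
    have jc: "jordan_curve \<gamma>'" unfolding jordan_curve_def using p' stg by metis
    have ch: "curve_homotopic P \<gamma>' C'"
      unfolding curve_homotopic_def
    proof (intro exI conjI)
      show "simple_path p'" "pathfinish p' = pathstart p'" "path_image p' = st ` \<gamma>'" using p' stg by auto
      show "simple_path q'" "pathfinish q' = pathstart q'" using q' by auto
      show "path_image q' = st ` C'" using q'(3) Eeq x0(2) by (simp add: x_def)
      show "homotopic_loops (st ` (UNIV - P)) p' q'" using homotopic_loops_subset[OF hA AB] stP by simp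
    qed
    have Fg: "F ` \<gamma>' \<subseteq> \<gamma>"
    proof
      fix v assume "v \<in> F ` \<gamma>'"
      then obtain w where w: "w \<in> \<gamma>'" "v = F w" by blast
      then have "Gs (st w) \<in> path_image p" using p'(3) by (auto simp: \<gamma>'_def)
      then have "st (F w) \<in> st ` \<gamma>" using p(3) by (simp add: Gst)
      then show "v \<in> \<gamma>" using w by auto
    qed
    have sepF: "finite F0" "bij_betw ((`) F) F0 F0" "\<And>L. L \<in> F0 \<Longrightarrow> inj_on F L"
      using sep by (auto simp: sep_family_def F_def)
    have "(\<Sum>L\<in>F0. Nint \<gamma>' L) \<le> (\<Sum>L\<in>F0. Nint \<gamma> (F ` L))"
      by (rule sum_mono) (rule Nint_mono_inj[OF sepF(3) Fg])
    also have "... = (\<Sum>L\<in>F0. Nint \<gamma> L)"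
      by (rule sum.reindex_bij_betw[OF sepF(2)])
    finally have "(\<Sum>L\<in>F0. Nint \<gamma>' L) \<le> (\<Sum>L\<in>F0. Nint \<gamma> L)" .
    then show "\<exists>\<gamma>''\<in>{\<gamma>. jordan_curve \<gamma> \<and> curve_homotopic P \<gamma> C'}. (\<Sum>L\<in>F0. Nint \<gamma>'' L) \<le> (\<Sum>L\<in>F0. Nint \<gamma> L)"
      using jc ch by blast
  qed
qed

end
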